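(* Let $(H,\mu)$ be a fuzzy Dedekind complete Riesz space, $(F,\nu)$ a fuzzy Archimedean laterally complete Riesz space, and $T:H\rightarrow F$ a fuzzy order continuous lattice homomorphism. If $H$ is a fuzzy order dense fuzzy Riesz subspace of a fuzzy Archimedean Riesz space $(E,\mu)$, then the formula $$T(x)=\sup\{T(h): h\in H,\ 0\le h\le x\},\qquad x\in E^+,$$ defines an extension of $T$ from $E$ into $F$ which is a fuzzy order continuous lattice homomorphism.
   Context: A fuzzy order on a real vector space $E$ is a map $\mu:E\times E\to[0,1]$ with $\mu(x,x)=1$; $\mu(x,y)+\mu(y,x)>1$ implies $x=y$; and $\mu(x,z)\ge\sup_{y}\min(\mu(x,y),\mu(y,z))$. Write $x\le y$ for $\mu(x,y)>\frac12$; upper bounds, suprema and infima are taken with respect to this relation. $(E,\mu)$ is a fuzzy ordered linear space if $\mu(x_1,x_2)>\frac12$ implies $\mu(x_1,x_2)\le\mu(x_1+x,x_2+x)$ for all $x$ and $\mu(x_1,x_2)\le\mu(\alpha x_1,\alpha x_2)$ for all $\alpha>0$; it is a fuzzy Riesz space if $x\vee y=\sup\{x,y\}$, $x\wedge y=\inf\{x,y\}$ exist for all $x,y$. $E^+=\{x:0\le x\}$, $|x|=x\vee(-x)$. Fuzzy Dedekind complete: every nonempty subset bounded above has a supremum. Fuzzy Archimedean: for every nonzero $x\in E^+$, $\{\lambda x:\lambda>0\}$ is not bounded above. Laterally complete: every set of pairwise disjoint positive elements has a supremum, where $x,y$ are disjoint if $|x|\wedge|y|=0$. A fuzzy Riesz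 subspace $H$ (vector subspace closed under $\vee,\wedge$, with the restricted order) is fuzzy order dense in $E$ if for each nonzero $x\in E^+$ there is a nonzero $g\in H$ with $0\le g$ and $\mu(g,x)>\frac12$. A fuzzy lattice homomorphism is a linear map with $T(x\vee y)=Tx\vee Ty$. A net $x_\alpha$ fuzzy order converges to $x$ if there is a net $y_\alpha$ decreasing with infimum $0$ and $\mu(|x_\alpha-x|,y_\alpha)>\frac12$ for all $\alpha$; $T$ is fuzzy order continuous if $x_\alpha\to0$ in fuzzy order implies $Tx_\alpha\to0$ in fuzzy order. *)

theory Defs
  imports Main "HOL-Analysis.Analysis"
begin

text \<open>Everything is stated relative to a carrier set S (UNIV for the whole space,
  a subset for a subspace with the restricted order).\<close>

definition fuzzy_order :: "('a \<Rightarrow> 'a \<Rightarrow> real) \<Rightarrow> 'a set \<Rightarrow> bool" where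
  "fuzzy_order \<mu> S \<longleftrightarrow>
     (\<forall>x\<in>S. \<forall>y\<in>S. 0 \<le> \<mu> x y \<and> \<mu> x y \<le> 1) \<and>
     (\<forall>x\<in>S. \<mu> x x = 1) \<and>
     (\<forall>x\<in>S. \<forall>y\<in>S. \<mu> x y + \<mu> y x > 1 \<longrightarrow> x = y) \<and>
     (\<forall>x\<in>S. \<forall>z\<in>S. \<forall>y\<in>S. min (\<mu> x y) (\<mu> y z) \<le> \<mu> x z)"

definition fleq :: "('a \<Rightarrow> 'a \<Rightarrow> real) \<Rightarrow> 'a \<Rightarrow> 'a \<Rightarrow> bool" where
  "fleq \<mu> x y \<longleftrightarrow> \<mu> x y > 1/2"

definition upper_bound :: "('a \<Rightarrow> 'a \<Rightarrow> real) \<Rightarrow> 'a set \<Rightarrow> 'a set \<Rightarrow> 'a \<Rightarrow> bool" where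
  "upper_bound \<mu> S A u \<longleftrightarrow> u \<in> S \<and> (\<forall>a\<in>A. fleq \<mu> a u)"

definition lower_bound :: "('a \<Rightarrow> 'a \<Rightarrow> real) \<Rightarrow> 'a set \<Rightarrow> 'a set \<Rightarrow> 'a \<Rightarrow> bool" where
  "lower_bound \<mu> S A l \<longleftrightarrow> l \<in> S \<and> (\<forall>a\<in>A. fleq \<mu> l a)"

definition is_sup :: "('a \<Rightarrow> 'a \<Rightarrow> real) \<Rightarrow> 'a set \<Rightarrow> 'a set \<Rightarrow> 'a \<Rightarrow> bool" where
  "is_sup \<mu> S A s \<longleftrightarrow> upper_bound \<mu> S A s \<and> (\<forall>u. upper_bound \<mu> S A u \<longrightarrow> fleq \<mu> s u)"

definition is_inf :: "('a \<Rightarrow> 'a \<Rightarrow> real) \<Rightarrow> 'a set \<Rightarrow> 'a set \<Rightarrow> 'a \<Rightarrow> bool" where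
  "is_inf \<mu> S A i \<longleftrightarrow> lower_bound \<mu> S A i \<and> (\<forall>l. lower_bound \<mu> S A l \<longrightarrow> fleq \<mu> l i)"

definition fuzzy_ordered_linear_space :: "('a::real_vector \<Rightarrow> 'a \<Rightarrow> real) \<Rightarrow> bool" where
  "fuzzy_ordered_linear_space \<mu> \<longleftrightarrow> fuzzy_order \<mu> UNIV \<and>
     (\<forall>x1 x2 x. \<mu> x1 x2 > 1/2 \<longrightarrow> \<mu> x1 x2 \<le> \<mu> (x1 + x) (x2 + x)) \<and>
     (\<forall>x1 x2 (\<alpha>::real). \<mu> x1 x2 > 1/2 \<and> \<alpha> > 0 \<longrightarrow> \<mu> x1 x2 \<le> \<mu> (\<alpha> *\<^sub>R x1) (\<alpha> *\<^sub>R x2))"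

definition fuzzy_riesz_space :: "('a::real_vector \<Rightarrow> 'a \<Rightarrow> real) \<Rightarrow> bool" where
  "fuzzy_riesz_space \<mu> \<longleftrightarrow> fuzzy_ordered_linear_space \<mu> \<and>
     (\<forall>x y. (\<exists>s. is_sup \<mu> UNIV {x, y} s) \<and> (\<exists>i. is_inf \<mu> UNIV {x, y} i))"

definition fsup :: "('a \<Rightarrow> 'a \<Rightarrow> real) \<Rightarrow> 'a \<Rightarrow> 'a \<Rightarrow> 'a" where
  "fsup \<mu> x y = (THE s. is_sup \<mu> UNIV {x, y} s)"

definition finf :: "('a \<Rightarrow> 'a \<Rightarrow> real) \<Rightarrow> 'a \<Rightarrow> 'a \<Rightarrow> 'a" where
  "finf \<mu> x y = (THE i. is_inf \<mu> UNIV {x, y} i)"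

definition fabs :: "('a::real_vector \<Rightarrow> 'a \<Rightarrow> real) \<Rightarrow> 'a \<Rightarrow> 'a" where
  "fabs \<mu> x = fsup \<mu> x (- x)"

definition fuzzy_dedekind_complete :: "('a \<Rightarrow> 'a \<Rightarrow> real) \<Rightarrow> 'a set \<Rightarrow> bool" where
  "fuzzy_dedekind_complete \<mu> S \<longleftrightarrow>
     (\<forall>A. A \<subseteq> S \<and> A \<noteq> {} \<and> (\<exists>u. upper_bound \<mu> S A u) \<longrightarrow> (\<exists>s. is_sup \<mu> S A s))"

definition fuzzy_archimedean :: "('a::real_vector \<Rightarrow> 'a \<Rightarrow> real) \<Rightarrow> bool" where
  "fuzzy_archimedean \<mu> \<longleftrightarrow>
     (\<forall>x. fleq \<mu> 0 x \<and> x \<noteq> 0 \<longrightarrow> \<not> (\<exists>u. upper_bound \<mu> UNIV {c *\<^sub>R x | c::real. c > 0} u))"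

definition fdisjoint :: "('a::real_vector \<Rightarrow> 'a \<Rightarrow> real) \<Rightarrow> 'a \<Rightarrow> 'a \<Rightarrow> bool" where
  "fdisjoint \<mu> x y \<longleftrightarrow> finf \<mu> (fabs \<mu> x) (fabs \<mu> y) = 0"

definition laterally_complete :: "('a::real_vector \<Rightarrow> 'a \<Rightarrow> real) \<Rightarrow> bool" where
  "laterally_complete \<mu> \<longleftrightarrow>
     (\<forall>A. A \<noteq> {} \<and> (\<forall>x\<in>A. fleq \<mu> 0 x) \<and> (\<forall>x\<in>A. \<forall>y\<in>A. x \<noteq> y \<longrightarrow> fdisjoint \<mu> x y)
          \<longrightarrow> (\<exists>s. is_sup \<mu> UNIV A s))"

definition fuzzy_riesz_subspace :: "('a::real_vector \<Rightarrow> 'a \<Rightarrow> real) \<Rightarrow> 'a set \<Rightarrow> bool" where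
  "fuzzy_riesz_subspace \<mu> H \<longleftrightarrow> subspace H \<and>
     (\<forall>x\<in>H. \<forall>y\<in>H. fsup \<mu> x y \<in> H \<and> finf \<mu> x y \<in> H)"

definition fuzzy_order_dense :: "('a::real_vector \<Rightarrow> 'a \<Rightarrow> real) \<Rightarrow> 'a set \<Rightarrow> bool" where
  "fuzzy_order_dense \<mu> H \<longleftrightarrow>
     (\<forall>x. fleq \<mu> 0 x \<and> x \<noteq> 0 \<longrightarrow> (\<exists>g\<in>H. g \<noteq> 0 \<and> fleq \<mu> 0 g \<and> fleq \<mu> g x))"

definition lattice_hom_on ::
  "('a::real_vector \<Rightarrow> 'a \<Rightarrow> real) \<Rightarrow> ('b::real_vector \<Rightarrow> 'b \<Rightarrow> real) \<Rightarrow> 'a set \<Rightarrow> ('a \<Rightarrow> 'b) \<Rightarrow> bool" where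
  "lattice_hom_on \<mu> \<nu> S T \<longleftrightarrow>
     (\<forall>x\<in>S. \<forall>y\<in>S. T (x + y) = T x + T y) \<and>
     (\<forall>x\<in>S. \<forall>c::real. T (c *\<^sub>R x) = c *\<^sub>R T x) \<and>
     (\<forall>x\<in>S. \<forall>y\<in>S. T (fsup \<mu> x y) = fsup \<nu> (T x) (T y))"

definition directed_index :: "'i set \<Rightarrow> ('i \<Rightarrow> 'i \<Rightarrow> bool) \<Rightarrow> bool" where
  "directed_index I le \<longleftrightarrow> I \<noteq> {} \<and> (\<forall>a\<in>I. le a a) \<and>
     (\<forall>a\<in>I. \<forall>b\<in>I. \<forall>c\<in>I. le a b \<and> le b c \<longrightarrow> le a c) \<and>
     (\<forall>a\<in>I. \<forall>b\<in>I. \<exists>c\<in>I. le a c \<and> le b c)"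

definition fuzzy_order_conv ::
  "('a::real_vector \<Rightarrow> 'a \<Rightarrow> real) \<Rightarrow> 'a set \<Rightarrow> 'i set \<Rightarrow> ('i \<Rightarrow> 'i \<Rightarrow> bool) \<Rightarrow> ('i \<Rightarrow> 'a) \<Rightarrow> 'a \<Rightarrow> bool" where
  "fuzzy_order_conv \<mu> S I le x x0 \<longleftrightarrow>
     (\<exists>y. (\<forall>\<alpha>\<in>I. y \<alpha> \<in> S) \<and>
          (\<forall>\<alpha>\<in>I. \<forall>\<beta>\<in>I. le \<alpha> \<beta> \<longrightarrow> fleq \<mu> (y \<beta>) (y \<alpha>)) \<and>
          is_inf \<mu> S (y ` I) 0 \<and>
          (\<forall>\<alpha>\<in>I. fleq \<mu> (fabs \<mu> (x \<alpha> - x0)) (y \<alpha>)))"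

definition fuzzy_order_continuous ::
  "'i itself \<Rightarrow> ('a::real_vector \<Rightarrow> 'a \<Rightarrow> real) \<Rightarrow> 'a set \<Rightarrow> ('b::real_vector \<Rightarrow> 'b \<Rightarrow> real) \<Rightarrow> ('a \<Rightarrow> 'b) \<Rightarrow> bool" where
  "fuzzy_order_continuous _ \<mu> S \<nu> T \<longleftrightarrow>
     (\<forall>(I::'i set) le x. directed_index I le \<and> (\<forall>\<alpha>\<in>I. x \<alpha> \<in> S) \<and> fuzzy_order_conv \<mu> S I le x 0
        \<longrightarrow> fuzzy_order_conv \<nu> UNIV I le (T \<circ> x) 0)"

end

theory Submission
  imports Defs
begin



locale frs =
  fixes \<mu> :: "'a::real_vector \<Rightarrow> 'a \<Rightarrow> real"
  assumes R: "fuzzy_riesz_space \<mu>"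
begin

lemma fo: "fuzzy_order \<mu> UNIV"
  using R unfolding fuzzy_riesz_space_def fuzzy_ordered_linear_space_def by auto

lemma refl[simp]: "fleq \<mu> x x"
  using fo unfolding fuzzy_order_def fleq_def by auto

lemma antisym: "fleq \<mu> x y \<Longrightarrow> fleq \<mu> y x \<Longrightarrow> x = y"
proof -
  assume a: "fleq \<mu> x y" "fleq \<mu> y x"
  have "\<mu> x y + \<mu> y x > 1" using a unfolding fleq_def by linarith
  moreover have "\<mu> x y + \<mu> y x > 1 \<longrightarrow> x = y" using fo unfolding fuzzy_order_def by blast
  ultimately show ?thesis by blast
qed

lemma trans: "fleq \<mu> x y \<Longrightarrow> fleq \<mu> y z \<Longrightarrow> fleq \<mu> x z"
proof -
  assume a: "fleq \<mu> x y" "fleq \<mu> y z"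
  have "min (\<mu> x y) (\<mu> y z) > 1/2" using a unfolding fleq_def by simp
  moreover have "min (\<mu> x y) (\<mu> y z) \<le> \<mu> x z" using fo unfolding fuzzy_order_def by blast
  ultimately show ?thesis unfolding fleq_def by linarith
qed

lemma add_right: "fleq \<mu> x y \<Longrightarrow> fleq \<mu> (x + z) (y + z)"
proof -
  assume a: "fleq \<mu> x y"
  have "\<mu> x y \<le> \<mu> (x + z) (y + z)" using a R
    unfolding fuzzy_riesz_space_def fuzzy_ordered_linear_space_def fleq_def by blast
  then show ?thesis using a unfolding fleq_def by linarith
qed

lemma add_right_iff: "fleq \<mu> (x + z) (y + z) \<longleftrightarrow> fleq \<mu> x y"
  using add_right[of x y z] add_right[of "x+z" "y+z" "-z"] by auto

lemma scale_pos: "c > 0 \<Longrightarrow> fleq \<mu> x y \<Longrightarrow> fleq \<mu> (c *\<^sub>R x) (c *\<^sub>R y)"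
proof -
  assume c: "c > 0" and a: "fleq \<mu> x y"
  have "\<mu> x y \<le> \<mu> (c *\<^sub>R x) (c *\<^sub>R y)" using a c R
    unfolding fuzzy_riesz_space_def fuzzy_ordered_linear_space_def fleq_def by blast
  then show ?thesis using a unfolding fleq_def by linarith
qed

lemma scale_pos_iff: "c > 0 \<Longrightarrow> fleq \<mu> (c *\<^sub>R x) (c *\<^sub>R y) \<longleftrightarrow> fleq \<mu> x y"
  using scale_pos[of c x y] scale_pos[of "inverse c" "c *\<^sub>R x" "c *\<^sub>R y"] by auto

lemma le_diff: "fleq \<mu> x y \<longleftrightarrow> fleq \<mu> 0 (y - x)"
  using add_right_iff[of x "-x" y] by (simp add: algebra_simps)

lemma le_diff2: "fleq \<mu> x y \<longleftrightarrow> fleq \<mu> (x - y) 0"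
  using add_right_iff[of "x - y" y 0] by (simp add: algebra_simps)

lemma le_add_iff: "fleq \<mu> a (a + b) \<longleftrightarrow> fleq \<mu> 0 b"
  using add_right_iff[of 0 a b] by (simp add: add.commute)

lemma neg_le: "fleq \<mu> x y \<Longrightarrow> fleq \<mu> (-y) (-x)"
proof -
  assume "fleq \<mu> x y"
  then have "fleq \<mu> (x + (-x-y)) (y + (-x-y))" by (rule add_right)
  then show ?thesis by (simp add: algebra_simps)
qed

lemma neg_le_iff: "fleq \<mu> (-y) (-x) \<longleftrightarrow> fleq \<mu> x y"
  using neg_le[of x y] neg_le[of "-y" "-x"] by auto

lemma add_mono: "fleq \<mu> a b \<Longrightarrow> fleq \<mu> c d \<Longrightarrow> fleq \<mu> (a + c) (b + d)"
  using add_right[of a b c] add_right[of c d b] trans by (metis add.commute)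

lemma diff_mono: "fleq \<mu> a b \<Longrightarrow> fleq \<mu> d c \<Longrightarrow> fleq \<mu> (a - c) (b - d)"
  using add_mono[of a b "-c" "-d"] neg_le by auto

lemma scale_nonneg: "c \<ge> 0 \<Longrightarrow> fleq \<mu> 0 x \<Longrightarrow> fleq \<mu> 0 (c *\<^sub>R x)"
  using scale_pos[of c 0 x] by (cases "c = 0") auto

lemma scale_mono_real: "fleq \<mu> 0 x \<Longrightarrow> a \<le> b \<Longrightarrow> fleq \<mu> (a *\<^sub>R x) (b *\<^sub>R x)"
proof -
  assume "fleq \<mu> 0 x" "a \<le> b"
  then have "fleq \<mu> 0 ((b - a) *\<^sub>R x)" using scale_nonneg by simp
  then show ?thesis using le_diff[of "a *\<^sub>R x" "b *\<^sub>R x"] by (simp add: scaleR_diff_left)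
qed

lemma scale_nonneg_mono: "c \<ge> 0 \<Longrightarrow> fleq \<mu> x y \<Longrightarrow> fleq \<mu> (c *\<^sub>R x) (c *\<^sub>R y)"
  using scale_pos[of c x y] by (cases "c = 0") auto

lemma sup_unique: "is_sup \<mu> S A s \<Longrightarrow> is_sup \<mu> S A t \<Longrightarrow> s = t"
proof -
  assume a: "is_sup \<mu> S A s" "is_sup \<mu> S A t"
  then have "fleq \<mu> s t" "fleq \<mu> t s" unfolding is_sup_def by auto
  then show ?thesis by (rule antisym)
qed

lemma inf_unique: "is_inf \<mu> S A s \<Longrightarrow> is_inf \<mu> S A t \<Longrightarrow> s = t"
proof -
  assume a: "is_inf \<mu> S A s" "is_inf \<mu> S A t"
  then have "fleq \<mu> s t" "fleq \<mu> t s" unfolding is_inf_def by auto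
  then show ?thesis by (rule antisym)
qed

lemma fsup_is: "is_sup \<mu> UNIV {x, y} (fsup \<mu> x y)"
proof -
  obtain s where s: "is_sup \<mu> UNIV {x, y} s" using R unfolding fuzzy_riesz_space_def by blast
  have "fsup \<mu> x y = s" unfolding fsup_def
    by (rule the_equality[where P="\<lambda>s. is_sup \<mu> UNIV {x, y} s", OF s]) (use s sup_unique in blast)
  then show ?thesis using s by simp
qed

lemma finf_is: "is_inf \<mu> UNIV {x, y} (finf \<mu> x y)"
proof -
  obtain s where s: "is_inf \<mu> UNIV {x, y} s" using R unfolding fuzzy_riesz_space_def by blast
  have "finf \<mu> x y = s" unfolding finf_def
    by (rule the_equality[where P="\<lambda>s. is_inf \<mu> UNIV {x, y} s", OF s]) (use s inf_unique in blast)
  then show ?thesis using s by simp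
qed

lemma sup_ge1: "fleq \<mu> x (fsup \<mu> x y)"
  using fsup_is[of x y] unfolding is_sup_def upper_bound_def by auto
lemma sup_ge2: "fleq \<mu> y (fsup \<mu> x y)"
  using fsup_is[of x y] unfolding is_sup_def upper_bound_def by auto
lemma sup_least: "fleq \<mu> x u \<Longrightarrow> fleq \<mu> y u \<Longrightarrow> fleq \<mu> (fsup \<mu> x y) u"
  using fsup_is[of x y] unfolding is_sup_def upper_bound_def by auto
lemma inf_le1: "fleq \<mu> (finf \<mu> x y) x"
  using finf_is[of x y] unfolding is_inf_def lower_bound_def by auto
lemma inf_le2: "fleq \<mu> (finf \<mu> x y) y"
  using finf_is[of x y] unfolding is_inf_def lower_bound_def by auto
lemma inf_greatest: "fleq \<mu> l x \<Longrightarrow> fleq \<mu> l y \<Longrightarrow> fleq \<mu> l (finf \<mu> x y)"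
  using finf_is[of x y] unfolding is_inf_def lower_bound_def by auto

lemma sup_le_iff: "fleq \<mu> (fsup \<mu> x y) u \<longleftrightarrow> fleq \<mu> x u \<and> fleq \<mu> y u"
  using sup_ge1[of x y] sup_ge2[of y x] sup_least[of x u y] trans[of x "fsup \<mu> x y" u] trans[of y "fsup \<mu> x y" u] by blast
lemma le_inf_iff: "fleq \<mu> l (finf \<mu> x y) \<longleftrightarrow> fleq \<mu> l x \<and> fleq \<mu> l y"
  using inf_le1[of x y] inf_le2[of x y] inf_greatest[of l x y] trans[of l "finf \<mu> x y" x] trans[of l "finf \<mu> x y" y] by blast

lemma sup_eqI: "fleq \<mu> x s \<Longrightarrow> fleq \<mu> y s \<Longrightarrow> (\<And>u. fleq \<mu> x u \<Longrightarrow> fleq \<mu> y u \<Longrightarrow> fleq \<mu> s u) \<Longrightarrow> fsup \<mu> x y = s"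
  by (rule antisym[OF sup_least]) (auto intro: sup_ge1 sup_ge2)
lemma inf_eqI: "fleq \<mu> i x \<Longrightarrow> fleq \<mu> i y \<Longrightarrow> (\<And>l. fleq \<mu> l x \<Longrightarrow> fleq \<mu> l y \<Longrightarrow> fleq \<mu> l i) \<Longrightarrow> finf \<mu> x y = i"
  by (rule antisym[OF _ inf_greatest]) (auto intro: inf_le1 inf_le2)

lemma sup_comm: "fsup \<mu> x y = fsup \<mu> y x"
  by (rule sup_eqI[OF sup_ge2 sup_ge1 sup_least])
lemma inf_comm: "finf \<mu> x y = finf \<mu> y x"
  by (rule inf_eqI[OF inf_le2 inf_le1 inf_greatest])

lemma sup_absorb: "fleq \<mu> x y \<Longrightarrow> fsup \<mu> x y = y"
  by (rule sup_eqI) auto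
lemma inf_absorb: "fleq \<mu> x y \<Longrightarrow> finf \<mu> x y = x"
  by (rule inf_eqI) auto
lemma sup_absorb2: "fleq \<mu> y x \<Longrightarrow> fsup \<mu> x y = x"
  by (rule sup_eqI) auto
lemma inf_absorb2: "fleq \<mu> y x \<Longrightarrow> finf \<mu> x y = y"
  by (rule inf_eqI) auto
lemma sup_idem[simp]: "fsup \<mu> x x = x" by (rule sup_absorb) simp
lemma inf_idem[simp]: "finf \<mu> x x = x" by (rule inf_absorb) simp

lemma sup_mono: "fleq \<mu> x x' \<Longrightarrow> fleq \<mu> y y' \<Longrightarrow> fleq \<mu> (fsup \<mu> x y) (fsup \<mu> x' y')"
  by (rule sup_least) (auto intro: trans[OF _ sup_ge1] trans[OF _ sup_ge2])
lemma inf_mono: "fleq \<mu> x x' \<Longrightarrow> fleq \<mu> y y' \<Longrightarrow> fleq \<mu> (finf \<mu> x y) (finf \<mu> x' y')"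
  by (rule inf_greatest) (auto intro: trans[OF inf_le1] trans[OF inf_le2])

lemma sup_translate: "fsup \<mu> (x + z) (y + z) = fsup \<mu> x y + z"
proof (rule sup_eqI)
  show "fleq \<mu> (x + z) (fsup \<mu> x y + z)" using sup_ge1 add_right by blast
  show "fleq \<mu> (y + z) (fsup \<mu> x y + z)" using sup_ge2 add_right by blast
  fix u assume "fleq \<mu> (x + z) u" "fleq \<mu> (y + z) u"
  then have "fleq \<mu> x (u - z)" "fleq \<mu> y (u - z)"
    using add_right_iff[of x z "u - z"] add_right_iff[of y z "u - z"] by auto
  then have "fleq \<mu> (fsup \<mu> x y) (u - z)" by (rule sup_least)
  then show "fleq \<mu> (fsup \<mu> x y + z) u" using add_right_iff[of _ z "u - z"] by simp
qed

lemma inf_translate: "finf \<mu> (x + z) (y + z) = finf \<mu> x y + z"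
proof (rule inf_eqI)
  show "fleq \<mu> (finf \<mu> x y + z) (x + z)" using inf_le1 add_right by blast
  show "fleq \<mu> (finf \<mu> x y + z) (y + z)" using inf_le2 add_right by blast
  fix u assume "fleq \<mu> u (x + z)" "fleq \<mu> u (y + z)"
  then have "fleq \<mu> (u - z) x" "fleq \<mu> (u - z) y"
    using add_right_iff[of "u - z" z x] add_right_iff[of "u - z" z y] by auto
  then have "fleq \<mu> (u - z) (finf \<mu> x y)" by (rule inf_greatest)
  then show "fleq \<mu> u (finf \<mu> x y + z)" using add_right_iff[of "u - z" z] by simp
qed

lemma sup_scale: "c > 0 \<Longrightarrow> fsup \<mu> (c *\<^sub>R x) (c *\<^sub>R y) = c *\<^sub>R fsup \<mu> x y"
proof (rule sup_eqI)
  assume c: "c > 0"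
  show "fleq \<mu> (c *\<^sub>R x) (c *\<^sub>R fsup \<mu> x y)" using sup_ge1 scale_pos c by blast
  show "fleq \<mu> (c *\<^sub>R y) (c *\<^sub>R fsup \<mu> x y)" using sup_ge2 scale_pos c by blast
  fix u assume "fleq \<mu> (c *\<^sub>R x) u" "fleq \<mu> (c *\<^sub>R y) u"
  then have "fleq \<mu> x (inverse c *\<^sub>R u)" "fleq \<mu> y (inverse c *\<^sub>R u)"
    using scale_pos_iff[of c x "inverse c *\<^sub>R u"] scale_pos_iff[of c y "inverse c *\<^sub>R u"] c by auto
  then have "fleq \<mu> (fsup \<mu> x y) (inverse c *\<^sub>R u)" by (rule sup_least)
  then show "fleq \<mu> (c *\<^sub>R fsup \<mu> x y) u" using scale_pos_iff[of c "fsup \<mu> x y" "inverse c *\<^sub>R u"] c by simp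
qed

lemma neg_sup: "fsup \<mu> (-x) (-y) = - finf \<mu> x y"
proof (rule sup_eqI)
  show "fleq \<mu> (-x) (- finf \<mu> x y)" using inf_le1 neg_le by blast
  show "fleq \<mu> (-y) (- finf \<mu> x y)" using inf_le2 neg_le by blast
  fix u assume "fleq \<mu> (-x) u" "fleq \<mu> (-y) u"
  then have "fleq \<mu> (-u) x" "fleq \<mu> (-u) y" using neg_le_iff by (metis minus_minus)+
  then have "fleq \<mu> (-u) (finf \<mu> x y)" by (rule inf_greatest)
  then show "fleq \<mu> (- finf \<mu> x y) u" using neg_le by fastforce
qed

lemma inf_via_sup: "finf \<mu> x y = - fsup \<mu> (-x) (-y)"
  using neg_sup by simp

lemma inf_scale: "c > 0 \<Longrightarrow> finf \<mu> (c *\<^sub>R x) (c *\<^sub>R y) = c *\<^sub>R finf \<mu> x y"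
  using sup_scale[of c "-x" "-y"] by (simp add: inf_via_sup)

lemma sup_plus_inf: "fsup \<mu> x y + finf \<mu> x y = x + y"
proof -
  have "fsup \<mu> x y = x + y - finf \<mu> x y"
  proof (rule sup_eqI)
    have e1: "x + y - finf \<mu> x y = x + (y - finf \<mu> x y)" "x + y - finf \<mu> x y = y + (x - finf \<mu> x y)" by simp_all
    show "fleq \<mu> x (x + y - finf \<mu> x y)" unfolding e1(1) le_add_iff using inf_le2[of x y] le_diff by blast
    show "fleq \<mu> y (x + y - finf \<mu> x y)" unfolding e1(2) le_add_iff using inf_le1[of x y] le_diff by blast
    fix u assume u: "fleq \<mu> x u" "fleq \<mu> y u"
    have "fleq \<mu> (y + (x - u)) (u + (x - u))" using u(2) by (rule add_right)
    then have "fleq \<mu> (x + y - u) x" by (simp add: algebra_simps)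
    moreover have "fleq \<mu> (x + y - u) y"
    proof -
      have "fleq \<mu> (x + (y - u)) (u + (y - u))" using u(1) by (rule add_right)
      then show ?thesis by (simp add: algebra_simps)
    qed
    ultimately have "fleq \<mu> (x + y - u) (finf \<mu> x y)" by (rule inf_greatest)
    then have "fleq \<mu> (x + y - u + (u - finf \<mu> x y)) (finf \<mu> x y + (u - finf \<mu> x y))" by (rule add_right)
    then show "fleq \<mu> (x + y - finf \<mu> x y) u" by (simp add: algebra_simps)
  qed
  then show ?thesis by simp
qed

lemma diff_inf: "p - finf \<mu> p q = fsup \<mu> (p - q) 0"
proof -
  have "p - finf \<mu> p q = fsup \<mu> (-p) (-q) + p" by (simp add: inf_via_sup)
  also have "\<dots> = fsup \<mu> (-p + p) (-q + p)" by (rule sup_translate[symmetric])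
  finally show ?thesis by (simp add: sup_comm algebra_simps)
qed

end


context frs
begin

lemma pos_decomp: "x = fsup \<mu> x 0 - fsup \<mu> (-x) 0"
proof -
  have "fsup \<mu> (-x) 0 + x = fsup \<mu> (-x + x) (0 + x)" by (rule sup_translate[symmetric])
  then have "fsup \<mu> (-x) 0 + x = fsup \<mu> x 0" by (simp add: sup_comm)
  then show ?thesis by (simp add: algebra_simps)
qed

lemma pos_nonneg: "fleq \<mu> 0 (fsup \<mu> x 0)" by (rule sup_ge2)
lemma pos_ge: "fleq \<mu> x (fsup \<mu> x 0)" by (rule sup_ge1)

lemma disj_pos_diff: "finf \<mu> p q = 0 \<Longrightarrow> fsup \<mu> (p - q) 0 = p"
  using diff_inf[of p q] by simp

lemma pos_neg_disj: "finf \<mu> (fsup \<mu> x 0) (fsup \<mu> (-x) 0) = 0"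
proof -
  let ?p = "fsup \<mu> x 0" and ?q = "fsup \<mu> (-x) 0"
  have "?p - ?q = x" using pos_decomp[of x] by simp
  then have "?p - finf \<mu> ?p ?q = ?p" using diff_inf[of ?p ?q] by simp
  then show ?thesis by simp
qed

lemma inf_nonneg: "fleq \<mu> 0 a \<Longrightarrow> fleq \<mu> 0 b \<Longrightarrow> fleq \<mu> 0 (finf \<mu> a b)"
  by (rule inf_greatest)

lemma disj_mono: "fleq \<mu> 0 a \<Longrightarrow> fleq \<mu> a a' \<Longrightarrow> fleq \<mu> 0 b \<Longrightarrow> finf \<mu> a' b = 0 \<Longrightarrow> finf \<mu> a b = 0"
proof -
  assume a: "fleq \<mu> 0 a" "fleq \<mu> a a'" "fleq \<mu> 0 b" "finf \<mu> a' b = 0"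
  have "fleq \<mu> (finf \<mu> a b) (finf \<mu> a' b)" using a by (intro inf_mono) auto
  moreover have "fleq \<mu> 0 (finf \<mu> a b)" using a by (intro inf_greatest)
  ultimately show ?thesis using a(4) antisym by auto
qed

lemma disj_scale: "fleq \<mu> 0 a \<Longrightarrow> fleq \<mu> 0 b \<Longrightarrow> finf \<mu> a b = 0 \<Longrightarrow> c \<ge> 0 \<Longrightarrow> finf \<mu> a (c *\<^sub>R b) = 0"
proof -
  assume a: "fleq \<mu> 0 a" "fleq \<mu> 0 b" "finf \<mu> a b = 0" and c: "c \<ge> 0"
  have cb: "fleq \<mu> 0 (c *\<^sub>R b)" using scale_nonneg c a by blast
  show ?thesis
  proof (cases "c \<le> 1")
    case True
    have "fleq \<mu> (c *\<^sub>R b) (1 *\<^sub>R b)" using scale_mono_real[OF a(2)] True by blast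
    then have "fleq \<mu> (c *\<^sub>R b) b" by simp
    then have "finf \<mu> (c *\<^sub>R b) a = 0" using disj_mono[OF cb _ a(1)] a(3) inf_comm by metis
    then show ?thesis using inf_comm by metis
  next
    case False
    then have c1: "c > 0" "c \<ge> 1" by auto
    have "fleq \<mu> (1 *\<^sub>R a) (c *\<^sub>R a)" using scale_mono_real[OF a(1)] c1 by blast
    then have "fleq \<mu> a (c *\<^sub>R a)" by simp
    moreover have "finf \<mu> (c *\<^sub>R a) (c *\<^sub>R b) = 0" using inf_scale[OF c1(1)] a(3) by simp
    ultimately show ?thesis using disj_mono[OF a(1) _ cb] by blast
  qed
qed

lemma fabs_pos: "fleq \<mu> 0 x \<Longrightarrow> fabs \<mu> x = x"
proof -
  assume a: "fleq \<mu> 0 x"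
  have "fleq \<mu> (-x) 0" using neg_le[OF a] by simp
  then have "fleq \<mu> (-x) x" using trans a by blast
  then show ?thesis unfolding fabs_def by (rule sup_absorb2)
qed

lemma le_fabs: "fleq \<mu> x (fabs \<mu> x)" unfolding fabs_def by (rule sup_ge1)
lemma fabs_nonneg: "fleq \<mu> 0 (fabs \<mu> x)"
proof -
  have "fleq \<mu> (x + (-x)) (fabs \<mu> x + fabs \<mu> x)"
    unfolding fabs_def by (rule add_mono[OF sup_ge1 sup_ge2])
  then have "fleq \<mu> 0 (2 *\<^sub>R fabs \<mu> x)" by (simp add: scaleR_2)
  then have "fleq \<mu> ((1/2) *\<^sub>R 0) ((1/2) *\<^sub>R (2 *\<^sub>R fabs \<mu> x))" by (intro scale_pos) auto
  then show ?thesis by simp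
qed

lemma archimedean_nat:
  assumes A: "fuzzy_archimedean \<mu>" and c: "fleq \<mu> 0 c" and h: "\<And>n::nat. fleq \<mu> (real n *\<^sub>R c) h"
  shows "c = 0"
proof (rule ccontr)
  assume "c \<noteq> 0"
  then have "\<not> (\<exists>u. upper_bound \<mu> UNIV {t *\<^sub>R c | t::real. t > 0} u)" using A c
    unfolding fuzzy_archimedean_def by blast
  moreover have "upper_bound \<mu> UNIV {t *\<^sub>R c | t::real. t > 0} h"
    unfolding upper_bound_def
  proof (intro conjI ballI)
    fix a assume "a \<in> {t *\<^sub>R c | t::real. t > 0}"
    then obtain t where t: "a = t *\<^sub>R c" "t > 0" by blast
    have "t \<le> real (nat \<lceil>t\<rceil>)" by linarith
    then have "fleq \<mu> (t *\<^sub>R c) (real (nat \<lceil>t\<rceil>) *\<^sub>R c)" using scale_mono_real[OF c] by blast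
    then show "fleq \<mu> a h" using h t trans by blast
  qed simp
  ultimately show False by blast
qed

lemma is_sup_ub: "is_sup \<mu> S A s \<Longrightarrow> a \<in> A \<Longrightarrow> fleq \<mu> a s"
  unfolding is_sup_def upper_bound_def by blast
lemma is_sup_least: "is_sup \<mu> S A s \<Longrightarrow> u \<in> S \<Longrightarrow> (\<And>a. a \<in> A \<Longrightarrow> fleq \<mu> a u) \<Longrightarrow> fleq \<mu> s u"
  unfolding is_sup_def upper_bound_def by blast
lemma is_supI: "s \<in> S \<Longrightarrow> (\<And>a. a \<in> A \<Longrightarrow> fleq \<mu> a s) \<Longrightarrow> (\<And>u. u \<in> S \<Longrightarrow> (\<And>a. a \<in> A \<Longrightarrow> fleq \<mu> a u) \<Longrightarrow> fleq \<mu> s u) \<Longrightarrow> is_sup \<mu> S A s"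
  unfolding is_sup_def upper_bound_def by blast
lemma is_sup_mem: "is_sup \<mu> S A s \<Longrightarrow> s \<in> S"
  unfolding is_sup_def upper_bound_def by blast
lemma is_inf_lb: "is_inf \<mu> S A s \<Longrightarrow> a \<in> A \<Longrightarrow> fleq \<mu> s a"
  unfolding is_inf_def lower_bound_def by blast
lemma is_inf_greatest: "is_inf \<mu> S A s \<Longrightarrow> l \<in> S \<Longrightarrow> (\<And>a. a \<in> A \<Longrightarrow> fleq \<mu> l a) \<Longrightarrow> fleq \<mu> l s"
  unfolding is_inf_def lower_bound_def by blast
lemma is_infI: "s \<in> S \<Longrightarrow> (\<And>a. a \<in> A \<Longrightarrow> fleq \<mu> s a) \<Longrightarrow> (\<And>l. l \<in> S \<Longrightarrow> (\<And>a. a \<in> A \<Longrightarrow> fleq \<mu> l a) \<Longrightarrow> fleq \<mu> l s) \<Longrightarrow> is_inf \<mu> S A s"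
  unfolding is_inf_def lower_bound_def by blast

lemma inf_distrib:
  assumes s: "is_sup \<mu> UNIV A s"
  shows "is_sup \<mu> UNIV {finf \<mu> a b | a. a \<in> A} (finf \<mu> s b)"
proof (rule is_supI)
  fix x assume "x \<in> {finf \<mu> a b | a. a \<in> A}"
  then obtain a where a: "x = finf \<mu> a b" "a \<in> A" by blast
  have "fleq \<mu> a s" by (rule is_sup_ub[OF s a(2)])
  then show "fleq \<mu> x (finf \<mu> s b)" unfolding a(1) using inf_mono refl by blast
next
  fix u assume u: "\<And>x. x \<in> {finf \<mu> a b | a. a \<in> A} \<Longrightarrow> fleq \<mu> x u"
  have "fleq \<mu> a (u + fsup \<mu> s b - b)" if a: "a \<in> A" for a
  proof -
    have as: "fleq \<mu> a s" by (rule is_sup_ub[OF s a])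
    have "fleq \<mu> (finf \<mu> a b) u" using u a by blast
    moreover have "fleq \<mu> (fsup \<mu> a b) (fsup \<mu> s b)" using as sup_mono refl by blast
    ultimately have "fleq \<mu> (finf \<mu> a b + fsup \<mu> a b) (u + fsup \<mu> s b)" by (rule add_mono)
    then have "fleq \<mu> (a + b) (u + fsup \<mu> s b)" using sup_plus_inf[of a b] by (simp add: add.commute)
    then have "fleq \<mu> (a + b + (-b)) (u + fsup \<mu> s b + (-b))" by (rule add_right)
    then show ?thesis by simp
  qed
  then have "fleq \<mu> s (u + fsup \<mu> s b - b)" using is_sup_least[OF s] by blast
  then have "fleq \<mu> (s + (b - fsup \<mu> s b)) (u + fsup \<mu> s b - b + (b - fsup \<mu> s b))" by (rule add_right)
  then have "fleq \<mu> (s + b - fsup \<mu> s b) u" by (simp add: algebra_simps)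
  moreover have "s + b - fsup \<mu> s b = finf \<mu> s b" using sup_plus_inf[of s b] by (simp add: algebra_simps)
  ultimately show "fleq \<mu> (finf \<mu> s b) u" by simp
qed simp

lemma sup_add_sets:
  assumes a: "is_sup \<mu> UNIV A a" and b: "is_sup \<mu> UNIV B b"
  shows "is_sup \<mu> UNIV {x + y | x y. x \<in> A \<and> y \<in> B} (a + b)"
proof (rule is_supI)
  fix z assume "z \<in> {x + y | x y. x \<in> A \<and> y \<in> B}"
  then obtain x y where z: "z = x + y" "x \<in> A" "y \<in> B" by blast
  show "fleq \<mu> z (a + b)" unfolding z by (rule add_mono[OF is_sup_ub[OF a z(2)] is_sup_ub[OF b z(3)]])
next
  fix u assume u: "\<And>z. z \<in> {x + y | x y. x \<in> A \<and> y \<in> B} \<Longrightarrow> fleq \<mu> z u"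
  have "fleq \<mu> y (u - a)" if y: "y \<in> B" for y
  proof -
    have "fleq \<mu> x (u - y)" if x: "x \<in> A" for x
    proof -
      have "fleq \<mu> (x + y) u" using u x y by blast
      then have "fleq \<mu> (x + y + (-y)) (u + (-y))" by (rule add_right)
      then show ?thesis by simp
    qed
    then have "fleq \<mu> a (u - y)" using is_sup_least[OF a] by blast
    then have "fleq \<mu> (a + (y - a)) (u - y + (y - a))" by (rule add_right)
    then show ?thesis by (simp add: algebra_simps)
  qed
  then have "fleq \<mu> b (u - a)" using is_sup_least[OF b] by blast
  then have "fleq \<mu> (b + a) (u - a + a)" by (rule add_right)
  then show "fleq \<mu> (a + b) u" by (simp add: algebra_simps)
qed simp

lemma sup_scale_set:
  assumes c: "c > 0" and s: "is_sup \<mu> UNIV A s"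
  shows "is_sup \<mu> UNIV ((\<lambda>x. c *\<^sub>R x) ` A) (c *\<^sub>R s)"
proof (rule is_supI)
  fix z assume "z \<in> (\<lambda>x. c *\<^sub>R x) ` A"
  then obtain x where "z = c *\<^sub>R x" "x \<in> A" by blast
  then show "fleq \<mu> z (c *\<^sub>R s)" using scale_pos[OF c is_sup_ub[OF s]] by blast
next
  fix u assume u: "\<And>z. z \<in> (\<lambda>x. c *\<^sub>R x) ` A \<Longrightarrow> fleq \<mu> z u"
  have "fleq \<mu> x (inverse c *\<^sub>R u)" if "x \<in> A" for x
  proof -
    have "fleq \<mu> (c *\<^sub>R x) u" using u that by blast
    then have "fleq \<mu> (inverse c *\<^sub>R (c *\<^sub>R x)) (inverse c *\<^sub>R u)" by (intro scale_pos) (use c in auto)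
    then show ?thesis using c by simp
  qed
  then have "fleq \<mu> s (inverse c *\<^sub>R u)" using is_sup_least[OF s] by blast
  then have "fleq \<mu> (c *\<^sub>R s) (c *\<^sub>R (inverse c *\<^sub>R u))" by (intro scale_pos) (use c in auto)
  then show "fleq \<mu> (c *\<^sub>R s) u" using c by simp
qed simp

end


locale ext = E: frs \<mu> + F: frs \<nu>
  for \<mu> :: "'a::real_vector \<Rightarrow> 'a \<Rightarrow> real" and \<nu> :: "'b::real_vector \<Rightarrow> 'b \<Rightarrow> real" +
  fixes H :: "'a set" and T :: "'a \<Rightarrow> 'b"
  assumes E_arch: "fuzzy_archimedean \<mu>"
    and H_sub: "fuzzy_riesz_subspace \<mu> H"
    and H_dense: "fuzzy_order_dense \<mu> H"
    and H_dc: "fuzzy_dedekind_complete \<mu> H"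
    and F_lat: "laterally_complete \<nu>"
    and T_hom: "lattice_hom_on \<mu> \<nu> H T"
    and T_oc: "fuzzy_order_continuous TYPE('a) \<mu> H \<nu> T"
begin

lemma Hsp: "subspace H" using H_sub unfolding fuzzy_riesz_subspace_def by blast
lemma H0[simp]: "0 \<in> H" using Hsp by (rule subspace_0)
lemma H_add: "x \<in> H \<Longrightarrow> y \<in> H \<Longrightarrow> x + y \<in> H" using Hsp by (rule subspace_add)
lemma H_scale: "x \<in> H \<Longrightarrow> c *\<^sub>R x \<in> H" using Hsp by (simp add: subspace_scale)
lemma H_neg: "x \<in> H \<Longrightarrow> - x \<in> H" using Hsp by (simp add: subspace_neg)
lemma H_diff: "x \<in> H \<Longrightarrow> y \<in> H \<Longrightarrow> x - y \<in> H" using Hsp by (simp add: subspace_diff)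
lemma H_sup: "x \<in> H \<Longrightarrow> y \<in> H \<Longrightarrow> fsup \<mu> x y \<in> H" using H_sub unfolding fuzzy_riesz_subspace_def by blast
lemma H_inf: "x \<in> H \<Longrightarrow> y \<in> H \<Longrightarrow> finf \<mu> x y \<in> H" using H_sub unfolding fuzzy_riesz_subspace_def by blast

lemma T_add: "x \<in> H \<Longrightarrow> y \<in> H \<Longrightarrow> T (x + y) = T x + T y" using T_hom unfolding lattice_hom_on_def by blast
lemma T_scale: "x \<in> H \<Longrightarrow> T (c *\<^sub>R x) = c *\<^sub>R T x" using T_hom unfolding lattice_hom_on_def by blast
lemma T_sup: "x \<in> H \<Longrightarrow> y \<in> H \<Longrightarrow> T (fsup \<mu> x y) = fsup \<nu> (T x) (T y)" using T_hom unfolding lattice_hom_on_def by blast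
lemma T0[simp]: "T 0 = 0" using T_scale[of 0 0] by simp
lemma T_neg: "x \<in> H \<Longrightarrow> T (- x) = - T x" using T_scale[of x "-1"] by simp
lemma T_diff: "x \<in> H \<Longrightarrow> y \<in> H \<Longrightarrow> T (x - y) = T x - T y"
  using T_add[of x "-y"] T_neg[of y] H_neg[of y] by simp
lemma T_inf: "x \<in> H \<Longrightarrow> y \<in> H \<Longrightarrow> T (finf \<mu> x y) = finf \<nu> (T x) (T y)"
  by (simp add: E.inf_via_sup F.inf_via_sup T_neg T_sup H_neg H_sup)
lemma T_pos: "x \<in> H \<Longrightarrow> fleq \<mu> 0 x \<Longrightarrow> fleq \<nu> 0 (T x)"
proof -
  assume x: "x \<in> H" "fleq \<mu> 0 x"
  have "T x = T (fsup \<mu> x 0)" using E.sup_absorb2[OF x(2)] by simp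
  also have "\<dots> = fsup \<nu> (T x) 0" using T_sup[OF x(1) H0] by simp
  finally show ?thesis using F.sup_ge2 by metis
qed
lemma T_mono: "x \<in> H \<Longrightarrow> y \<in> H \<Longrightarrow> fleq \<mu> x y \<Longrightarrow> fleq \<nu> (T x) (T y)"
proof -
  assume a: "x \<in> H" "y \<in> H" "fleq \<mu> x y"
  have "fleq \<nu> 0 (T (y - x))" using T_pos[OF H_diff[OF a(2,1)]] a(3) E.le_diff by blast
  then show ?thesis using T_diff[OF a(2,1)] F.le_diff by simp
qed

lemma dense: "fleq \<mu> 0 x \<Longrightarrow> x \<noteq> 0 \<Longrightarrow> \<exists>g\<in>H. g \<noteq> 0 \<and> fleq \<mu> 0 g \<and> fleq \<mu> g x"
  using H_dense unfolding fuzzy_order_dense_def by blast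

lemma dens_le:
  assumes A: "A \<subseteq> H" and s: "is_sup \<mu> H A s" and ax: "\<And>a. a \<in> A \<Longrightarrow> fleq \<mu> a x"
  shows "fleq \<mu> s x"
proof -
  have sH: "s \<in> H" using s by (rule E.is_sup_mem)
  let ?z = "s - finf \<mu> s x"
  have z0: "fleq \<mu> 0 ?z" using E.inf_le1[of s x] E.le_diff by blast
  have "?z = 0"
  proof (rule ccontr)
    assume "?z \<noteq> 0"
    then obtain g where g: "g \<in> H" "g \<noteq> 0" "fleq \<mu> 0 g" "fleq \<mu> g ?z" using dense z0 by blast
    have "fleq \<mu> a (s - g)" if a: "a \<in> A" for a
    proof -
      have "fleq \<mu> a (finf \<mu> s x)" using E.inf_greatest[OF E.is_sup_ub[OF s a] ax[OF a]] .
      also have "finf \<mu> s x = s - ?z" by simp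
      finally have "fleq \<mu> a (s - ?z)" .
      moreover have "fleq \<mu> (s - ?z) (s - g)" using E.diff_mono[OF E.refl g(4)] .
      ultimately show ?thesis using E.trans by blast
    qed
    then have "fleq \<mu> s (s - g)" using E.is_sup_least[OF s H_diff[OF sH g(1)]] by blast
    then have "fleq \<mu> (s + (g - s)) (s - g + (g - s))" by (rule E.add_right)
    then have "fleq \<mu> g 0" by simp
    then show False using g E.antisym by blast
  qed
  then have "s = finf \<mu> s x" by simp
  then show ?thesis using E.inf_le2 by metis
qed

lemma ideal:
  assumes y0: "fleq \<mu> 0 y" and yh: "fleq \<mu> y h" and h: "h \<in> H"
  shows "y \<in> H"
proof -
  define D where "D = {d \<in> H. fleq \<mu> 0 d \<and> fleq \<mu> d y}"
  have DH: "D \<subseteq> H" unfolding D_def by blast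
  have "0 \<in> D" unfolding D_def using y0 by simp
  moreover have "upper_bound \<mu> H D h" unfolding upper_bound_def D_def using h yh E.trans by blast
  ultimately obtain s where s: "is_sup \<mu> H D s" using H_dc DH unfolding fuzzy_dedekind_complete_def by blast
  have sH: "s \<in> H" using s by (rule E.is_sup_mem)
  have sy: "fleq \<mu> s y" using dens_le[OF DH s] unfolding D_def by blast
  have s0: "fleq \<mu> 0 s" using E.is_sup_ub[OF s \<open>0 \<in> D\<close>] .
  have "y - s = 0"
  proof (rule ccontr)
    assume ne: "y - s \<noteq> 0"
    have "fleq \<mu> 0 (y - s)" using sy E.le_diff by blast
    then obtain g where g: "g \<in> H" "g \<noteq> 0" "fleq \<mu> 0 g" "fleq \<mu> g (y - s)" using dense ne by blast
    have "s + g \<in> D" unfolding D_def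
    proof (intro CollectI conjI)
      show "s + g \<in> H" using H_add[OF sH g(1)] .
      show "fleq \<mu> 0 (s + g)" using E.add_mono[OF s0 g(3)] by simp
      have "fleq \<mu> (g + s) (y - s + s)" using g(4) by (rule E.add_right)
      then show "fleq \<mu> (s + g) y" by (simp add: add.commute)
    qed
    then have "fleq \<mu> (s + g) s" using E.is_sup_ub[OF s] by blast
    then have "fleq \<mu> (s + g + (-s)) (s + (-s))" by (rule E.add_right)
    then have "fleq \<mu> g 0" by simp
    then show False using g E.antisym by blast
  qed
  then show ?thesis using sH by simp
qed

lemma ideal_inf: "fleq \<mu> 0 x \<Longrightarrow> h \<in> H \<Longrightarrow> fleq \<mu> 0 h \<Longrightarrow> finf \<mu> x h \<in> H"
  by (rule ideal[OF E.inf_greatest E.inf_le2]) auto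

lemma sup_H_disj:
  assumes A: "A \<subseteq> H" and s: "is_sup \<mu> H A s" and b: "b \<in> H" "fleq \<mu> 0 b"
    and a0: "a0 \<in> A" "fleq \<mu> 0 a0" and ad: "\<And>a. a \<in> A \<Longrightarrow> finf \<mu> a b = 0"
  shows "finf \<mu> s b = 0"
proof -
  have sH: "s \<in> H" using s by (rule E.is_sup_mem)
  have "fleq \<mu> a (fsup \<mu> s b - b)" if a: "a \<in> A" for a
  proof -
    have "fsup \<mu> a b + finf \<mu> a b = a + b" by (rule E.sup_plus_inf)
    then have e: "a = fsup \<mu> a b - b" using ad[OF a] by (simp add: algebra_simps)
    have "fleq \<mu> (fsup \<mu> a b) (fsup \<mu> s b)" using E.sup_mono[OF E.is_sup_ub[OF s a] E.refl] .
    then have "fleq \<mu> (fsup \<mu> a b + (-b)) (fsup \<mu> s b + (-b))" by (rule E.add_right)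
    then show ?thesis using e by simp
  qed
  then have "fleq \<mu> s (fsup \<mu> s b - b)"
    using E.is_sup_least[OF s H_diff[OF H_sup[OF sH b(1)] b(1)]] by blast
  then have "fleq \<mu> (s + (b - fsup \<mu> s b)) (fsup \<mu> s b - b + (b - fsup \<mu> s b))" by (rule E.add_right)
  moreover have "s + (b - fsup \<mu> s b) = finf \<mu> s b" using E.sup_plus_inf[of s b] by (simp add: algebra_simps)
  ultimately have "fleq \<mu> (finf \<mu> s b) 0" by simp
  moreover have "fleq \<mu> 0 (finf \<mu> s b)"
    using E.inf_greatest[OF E.trans[OF a0(2) E.is_sup_ub[OF s a0(1)]] b(2)] .
  ultimately show ?thesis using E.antisym by blast
qed

end


context ext
begin

definition Kset where "Kset x = {k \<in> H. fleq \<mu> 0 k \<and> k \<noteq> 0 \<and> (\<exists>b\<in>H. \<forall>n::nat. fleq \<mu> (finf \<mu> x (real n *\<^sub>R k)) b)}"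
definition Pset where "Pset x k = {finf \<mu> x (real n *\<^sub>R k) | n::nat. True}"
definition pk where "pk x k = (SOME q. is_sup \<mu> H (Pset x k) q)"
definition Zs where "Zs x = {M. M \<subseteq> Kset x \<and> (\<forall>k\<in>M. \<forall>j\<in>M. k \<noteq> j \<longrightarrow> finf \<mu> k j = 0)}"

lemma Pset_H: "fleq \<mu> 0 x \<Longrightarrow> k \<in> H \<Longrightarrow> fleq \<mu> 0 k \<Longrightarrow> Pset x k \<subseteq> H"
  unfolding Pset_def using ideal_inf H_scale E.scale_nonneg by fastforce

lemma Pset_0: "fleq \<mu> 0 x \<Longrightarrow> 0 \<in> Pset x k"
proof -
  assume "fleq \<mu> 0 x"
  then have "finf \<mu> x (real 0 *\<^sub>R k) = 0" using E.inf_absorb2 by simp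
  then show ?thesis unfolding Pset_def by (metis (mono_tags, lifting) mem_Collect_eq)
qed

lemma pk_sup: assumes x: "fleq \<mu> 0 x" and k: "k \<in> Kset x" shows "is_sup \<mu> H (Pset x k) (pk x k)"
proof -
  have kH: "k \<in> H" "fleq \<mu> 0 k" using k unfolding Kset_def by auto
  obtain b where b: "b \<in> H" "\<forall>n::nat. fleq \<mu> (finf \<mu> x (real n *\<^sub>R k)) b" using k unfolding Kset_def by blast
  have "upper_bound \<mu> H (Pset x k) b" unfolding upper_bound_def Pset_def using b by blast
  then have "\<exists>q. is_sup \<mu> H (Pset x k) q"
    using H_dc Pset_H[OF x kH] Pset_0[OF x, of k] unfolding fuzzy_dedekind_complete_def by blast
  then show ?thesis unfolding pk_def by (rule someI_ex)
qed

lemma pk_H: "fleq \<mu> 0 x \<Longrightarrow> k \<in> Kset x \<Longrightarrow> pk x k \<in> H"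
  using pk_sup E.is_sup_mem by blast

lemma pk_ge: "fleq \<mu> 0 x \<Longrightarrow> k \<in> Kset x \<Longrightarrow> fleq \<mu> (finf \<mu> x (real n *\<^sub>R k)) (pk x k)"
  using pk_sup E.is_sup_ub unfolding Pset_def by blast

lemma pk_nonneg: "fleq \<mu> 0 x \<Longrightarrow> k \<in> Kset x \<Longrightarrow> fleq \<mu> 0 (pk x k)"
  using pk_sup E.is_sup_ub Pset_0 by blast

lemma pk_le: assumes x: "fleq \<mu> 0 x" and k: "k \<in> Kset x" shows "fleq \<mu> (pk x k) x"
proof (rule dens_le[OF _ pk_sup[OF x k]])
  show "Pset x k \<subseteq> H" using Pset_H[OF x] k unfolding Kset_def by blast
  show "\<And>a. a \<in> Pset x k \<Longrightarrow> fleq \<mu> a x" unfolding Pset_def using E.inf_le1 by blast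
qed

lemma Kset_H: "k \<in> Kset x \<Longrightarrow> k \<in> H" and Kset_pos: "k \<in> Kset x \<Longrightarrow> fleq \<mu> 0 k"
  unfolding Kset_def by auto

lemma disj_below_scale:
  assumes x: "fleq \<mu> 0 x" and a: "fleq \<mu> 0 q" "fleq \<mu> 0 j" "finf \<mu> q j = 0"
  shows "finf \<mu> (finf \<mu> x (real n *\<^sub>R j)) q = 0"
proof -
  have "finf \<mu> q (real n *\<^sub>R j) = 0" using E.disj_scale[OF a] by simp
  then have "finf \<mu> (real n *\<^sub>R j) q = 0" using E.inf_comm by metis
  moreover have "fleq \<mu> 0 (finf \<mu> x (real n *\<^sub>R j))" using E.inf_greatest[OF x E.scale_nonneg[OF _ a(2)]] by simp
  ultimately show ?thesis using E.disj_mono[OF _ E.inf_le2 a(1)] by blast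
qed

lemma pk_disj:
  assumes x: "fleq \<mu> 0 x" and k: "k \<in> Kset x" and j: "j \<in> Kset x" and kj: "finf \<mu> k j = 0"
  shows "finf \<mu> (pk x k) (pk x j) = 0"
proof -
  have jk: "finf \<mu> j k = 0" using kj E.inf_comm by metis
  have 1: "finf \<mu> (pk x k) j = 0"
  proof (rule sup_H_disj[OF Pset_H[OF x Kset_H[OF k] Kset_pos[OF k]] pk_sup[OF x k] Kset_H[OF j] Kset_pos[OF j] Pset_0[OF x] E.refl])
    fix a assume "a \<in> Pset x k"
    then obtain n where "a = finf \<mu> x (real n *\<^sub>R k)" unfolding Pset_def by blast
    then show "finf \<mu> a j = 0" using disj_below_scale[OF x Kset_pos[OF j] Kset_pos[OF k] jk] by simp
  qed
  have 2: "finf \<mu> j (pk x k) = 0" using 1 E.inf_comm by metis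
  have "finf \<mu> (pk x j) (pk x k) = 0"
  proof (rule sup_H_disj[OF Pset_H[OF x Kset_H[OF j] Kset_pos[OF j]] pk_sup[OF x j] pk_H[OF x k] pk_nonneg[OF x k] Pset_0[OF x] E.refl])
    fix a assume "a \<in> Pset x j"
    then obtain n where "a = finf \<mu> x (real n *\<^sub>R j)" unfolding Pset_def by blast
    then show "finf \<mu> a (pk x k) = 0" using disj_below_scale[OF x pk_nonneg[OF x k] Kset_pos[OF j] 1] by simp
  qed
  then show ?thesis using E.inf_comm by metis
qed

lemma Zs_max: "\<exists>M\<in>Zs x. \<forall>X\<in>Zs x. M \<subseteq> X \<longrightarrow> X = M"
proof (rule Zorn_Lemma, intro ballI)
  fix C assume C: "C \<in> chains (Zs x)"
  have "\<Union>C \<subseteq> Kset x" using chainsD2[OF C] unfolding Zs_def by blast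
  moreover have "finf \<mu> k j = 0" if kj: "k \<in> \<Union>C" "j \<in> \<Union>C" "k \<noteq> j" for k j
  proof -
    obtain A B where AB: "A \<in> C" "B \<in> C" "k \<in> A" "j \<in> B" using kj by blast
    then have "A \<subseteq> B \<or> B \<subseteq> A" using chainsD[OF C] by blast
    moreover have "A \<in> Zs x" "B \<in> Zs x" using chainsD2[OF C] AB by auto
    ultimately show ?thesis using AB kj unfolding Zs_def by blast
  qed
  ultimately show "\<Union>C \<in> Zs x" unfolding Zs_def by blast
qed

end


context ext
begin

lemma key_zero:
  assumes x: "fleq \<mu> 0 x" and M: "M \<in> Zs x" "\<forall>X\<in>Zs x. M \<subseteq> X \<longrightarrow> X = M"
   and h: "h \<in> H" "fleq \<mu> 0 h" "fleq \<mu> h x"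
   and lH: "l' \<in> H" "fleq \<mu> 0 l'"
   and l0: "fleq \<mu> l' h"
   and lk: "\<And>k. k \<in> M \<Longrightarrow> fleq \<mu> l' (h - finf \<mu> h (pk x k))"
  shows "l' = 0"
proof (rule ccontr)
  assume l'ne: "l' \<noteq> 0"
  have MK: "M \<subseteq> Kset x" using M(1) unfolding Zs_def by blast
  have disjM: "finf \<mu> l' k = 0" if k: "k \<in> M" for k
  proof -
    have kK: "k \<in> Kset x" using MK k by blast
    define c where "c = finf \<mu> l' k"
    have c0: "fleq \<mu> 0 c" unfolding c_def using E.inf_greatest[OF lH(2) Kset_pos[OF kK]] .
    have cl: "fleq \<mu> c l'" unfolding c_def by (rule E.inf_le1)
    have ck: "fleq \<mu> c k" unfolding c_def by (rule E.inf_le2)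
    have "fleq \<mu> (real m *\<^sub>R c) h" for m :: nat
    proof (induction m)
      case 0 show ?case using h(2) by simp
    next
      case (Suc m)
      have a1: "fleq \<mu> (real m *\<^sub>R c) (real m *\<^sub>R k)" using E.scale_nonneg_mono[OF _ ck] by simp
      have "fleq \<mu> (real m *\<^sub>R c) (finf \<mu> h (real m *\<^sub>R k))" using E.inf_greatest[OF Suc.IH a1] .
      moreover have "fleq \<mu> (finf \<mu> h (real m *\<^sub>R k)) (finf \<mu> x (real m *\<^sub>R k))" using E.inf_mono[OF h(3) E.refl] .
      moreover have "fleq \<mu> (finf \<mu> x (real m *\<^sub>R k)) (pk x k)" using pk_ge[OF x kK] .
      ultimately have a2: "fleq \<mu> (real m *\<^sub>R c) (pk x k)" using E.trans by blast
      have a3: "fleq \<mu> (real m *\<^sub>R c) (finf \<mu> h (pk x k))" using E.inf_greatest[OF Suc.IH a2] .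
      have a4: "fleq \<mu> c (h - finf \<mu> h (pk x k))" using E.trans[OF cl lk[OF k]] .
      have "fleq \<mu> (real m *\<^sub>R c + c) (finf \<mu> h (pk x k) + (h - finf \<mu> h (pk x k)))" using E.add_mono[OF a3 a4] .
      moreover have "real (Suc m) *\<^sub>R c = real m *\<^sub>R c + c" by (simp add: algebra_simps)
      ultimately show ?case by simp
    qed
    then have "c = 0" using E.archimedean_nat[OF E_arch c0] by blast
    then show ?thesis unfolding c_def .
  qed
  have "\<exists>m::nat. m \<ge> 1 \<and> l' - finf \<mu> l' ((1 / real m) *\<^sub>R x) \<noteq> 0"
  proof (rule ccontr)
    assume "\<not> ?thesis"
    then have eq: "\<And>m::nat. m \<ge> 1 \<Longrightarrow> l' = finf \<mu> l' ((1 / real m) *\<^sub>R x)" by auto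
    have "fleq \<mu> (real n *\<^sub>R l') x" for n :: nat
    proof (cases "n = 0")
      case True then show ?thesis using x by simp
    next
      case False
      then have n1: "n \<ge> 1" by simp
      have "fleq \<mu> l' ((1 / real n) *\<^sub>R x)" using eq[OF n1] E.inf_le2 by metis
      then have "fleq \<mu> (real n *\<^sub>R l') (real n *\<^sub>R ((1 / real n) *\<^sub>R x))" using n1 by (intro E.scale_pos) auto
      then show ?thesis using n1 by simp
    qed
    then have "l' = 0" using E.archimedean_nat[OF E_arch lH(2)] by blast
    then show False using l'ne by blast
  qed
  then obtain m :: nat where m: "m \<ge> 1" "l' - finf \<mu> l' ((1 / real m) *\<^sub>R x) \<noteq> 0" by blast
  define t where "t = 1 / real m"
  define k' where "k' = l' - finf \<mu> l' (t *\<^sub>R x)"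
  have t0: "t > 0" unfolding t_def using m by simp
  have mt: "real m * t = 1" unfolding t_def using m by simp
  have k'ne: "k' \<noteq> 0" unfolding k'_def t_def using m by simp
  have tx0: "fleq \<mu> 0 (t *\<^sub>R x)" using E.scale_nonneg t0 x by simp
  have infH: "finf \<mu> l' (t *\<^sub>R x) \<in> H" using ideal_inf[OF tx0 lH] E.inf_comm by metis
  have k'H: "k' \<in> H" unfolding k'_def using H_diff[OF lH(1) infH] .
  have k'0: "fleq \<mu> 0 k'" unfolding k'_def using E.inf_le1 E.le_diff by blast
  have k'l: "fleq \<mu> k' l'"
  proof -
    have "fleq \<mu> 0 (finf \<mu> l' (t *\<^sub>R x))" using E.inf_greatest[OF lH(2) tx0] .
    then have "fleq \<mu> (l' - finf \<mu> l' (t *\<^sub>R x)) (l' - 0)" using E.diff_mono[OF E.refl] by blast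
    then show ?thesis unfolding k'_def by simp
  qed
  have disjk': "finf \<mu> k' k = 0" if k: "k \<in> M" for k
    using E.disj_mono[OF k'0 k'l Kset_pos disjM[OF k]] MK k by blast
  have bnd: "fleq \<mu> (finf \<mu> x (real n *\<^sub>R k')) (real m *\<^sub>R l')" for n :: nat
  proof -
    have k'eq: "k' = fsup \<mu> (l' - t *\<^sub>R x) 0" unfolding k'_def by (rule E.diff_inf)
    have "real m *\<^sub>R k' = fsup \<mu> (real m *\<^sub>R (l' - t *\<^sub>R x)) (real m *\<^sub>R 0)"
      unfolding k'eq using E.sup_scale[of "real m" "l' - t *\<^sub>R x" 0] m by simp
    also have "real m *\<^sub>R (l' - t *\<^sub>R x) = real m *\<^sub>R l' - x"
      using mt by (simp add: scaleR_diff_right)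
    finally have mk: "real m *\<^sub>R k' = fsup \<mu> (- (x - real m *\<^sub>R l')) 0" by simp
    define u where "u = x - real m *\<^sub>R l'"
    have pn: "finf \<mu> (fsup \<mu> u 0) (fsup \<mu> (-u) 0) = 0" by (rule E.pos_neg_disj)
    have "finf \<mu> (fsup \<mu> u 0) ((real n / real m) *\<^sub>R fsup \<mu> (-u) 0) = 0"
      using E.disj_scale[OF E.sup_ge2 E.sup_ge2 pn] by simp
    moreover have "(real n / real m) *\<^sub>R fsup \<mu> (-u) 0 = real n *\<^sub>R k'"
    proof -
      have "(real n / real m) *\<^sub>R fsup \<mu> (-u) 0 = (real n / real m) *\<^sub>R (real m *\<^sub>R k')"
        using mk unfolding u_def by simp
      also have "\<dots> = real n *\<^sub>R k'" using m by simp
      finally show ?thesis .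
    qed
    ultimately have d: "finf \<mu> (fsup \<mu> u 0) (real n *\<^sub>R k') = 0" by simp
    have ml0: "fleq \<mu> 0 (real m *\<^sub>R l')" using E.scale_nonneg lH(2) by simp
    have "finf \<mu> (x + - (real m *\<^sub>R l')) (real n *\<^sub>R k' + - (real m *\<^sub>R l')) = finf \<mu> x (real n *\<^sub>R k') + - (real m *\<^sub>R l')"
      by (rule E.inf_translate)
    moreover have "fleq \<mu> (finf \<mu> (x + - (real m *\<^sub>R l')) (real n *\<^sub>R k' + - (real m *\<^sub>R l'))) (finf \<mu> (fsup \<mu> u 0) (real n *\<^sub>R k'))"
    proof (rule E.inf_mono)
      show "fleq \<mu> (x + - (real m *\<^sub>R l')) (fsup \<mu> u 0)" unfolding u_def using E.sup_ge1 by simp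
      show "fleq \<mu> (real n *\<^sub>R k' + - (real m *\<^sub>R l')) (real n *\<^sub>R k')"
        using E.diff_mono[OF E.refl ml0] by simp
    qed
    ultimately have "fleq \<mu> (finf \<mu> x (real n *\<^sub>R k') - real m *\<^sub>R l') 0" using d by simp
    then show ?thesis using E.le_diff2 by blast
  qed
  have k'K: "k' \<in> Kset x" unfolding Kset_def using k'H k'0 k'ne bnd H_scale[OF lH(1)] by blast
  have "insert k' M \<in> Zs x" unfolding Zs_def
  proof (intro CollectI conjI ballI impI)
    show "insert k' M \<subseteq> Kset x" using k'K MK by blast
    fix k j assume kj: "k \<in> insert k' M" "j \<in> insert k' M" "k \<noteq> j"
    show "finf \<mu> k j = 0"
    proof (cases "k = k'")
      case True
      then have "j \<in> M" using kj by auto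
      then show ?thesis using disjk' True by blast
    next
      case False
      then have k: "k \<in> M" using kj by auto
      show ?thesis
      proof (cases "j = k'")
        case True then show ?thesis using disjk'[OF k] E.inf_comm by metis
      next
        case False then have "j \<in> M" using kj by auto
        then show ?thesis using k kj M(1) unfolding Zs_def by blast
      qed
    qed
  qed
  then have "insert k' M = M" using M(2) by blast
  then have "k' \<in> M" by blast
  then have "finf \<mu> k' k' = 0" using disjk' by blast
  then show False using k'ne by simp
qed

end


context ext
begin

definition Wset where "Wset x = {T h | h. h \<in> H \<and> fleq \<mu> 0 h \<and> fleq \<mu> h x}"

lemma sup_exists:
  assumes x: "fleq \<mu> 0 x"
  shows "\<exists>s. is_sup \<nu> UNIV (Wset x) s"
proof -
  obtain M where M: "M \<in> Zs x" "\<forall>X\<in>Zs x. M \<subseteq> X \<longrightarrow> X = M" using Zs_max by blast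
  have MK: "M \<subseteq> Kset x" using M(1) unfolding Zs_def by blast
  have Mdisj: "\<And>k j. k \<in> M \<Longrightarrow> j \<in> M \<Longrightarrow> k \<noteq> j \<Longrightarrow> finf \<mu> k j = 0" using M(1) unfolding Zs_def by blast
  define A where "A = insert 0 ((\<lambda>k. T (pk x k)) ` M)"
  have A_pos: "fleq \<nu> 0 a" if "a \<in> A" for a
    using that MK T_pos[OF pk_H[OF x] pk_nonneg[OF x]] unfolding A_def by auto
  have A_disj: "fdisjoint \<nu> a b" if ab: "a \<in> A" "b \<in> A" "a \<noteq> b" for a b
  proof -
    have "finf \<nu> a b = 0"
    proof (cases "a = 0")
      case True then show ?thesis using F.inf_absorb[OF A_pos[OF ab(2)]] by simp
    next
      case False
      show ?thesis
      proof (cases "b = 0")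
        case True then show ?thesis using F.inf_absorb2[OF A_pos[OF ab(1)]] by simp
      next
        case False': False
        obtain k where k: "k \<in> M" "a = T (pk x k)" using ab(1) False unfolding A_def by auto
        obtain j where j: "j \<in> M" "b = T (pk x j)" using ab(2) False' unfolding A_def by auto
        have "k \<noteq> j" using k j ab(3) by blast
        then have "finf \<mu> (pk x k) (pk x j) = 0" using pk_disj[OF x] Mdisj k j MK by blast
        then show ?thesis using T_inf[OF pk_H[OF x] pk_H[OF x]] k j MK by force
      qed
    qed
    then show ?thesis unfolding fdisjoint_def using F.fabs_pos A_pos ab by simp
  qed
  have "A \<noteq> {}" unfolding A_def by blast
  then have pre: "A \<noteq> {} \<and> (\<forall>x\<in>A. fleq \<nu> 0 x) \<and> (\<forall>x\<in>A. \<forall>y\<in>A. x \<noteq> y \<longrightarrow> fdisjoint \<nu> x y)"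
    using A_pos A_disj by blast
  have "\<exists>s. is_sup \<nu> UNIV A s"
    using mp[OF spec[OF F_lat[unfolded laterally_complete_def], of A] pre] by simp
  then obtain s where s: "is_sup \<nu> UNIV A s" by blast
  have s0: "fleq \<nu> 0 s" using F.is_sup_ub[OF s] unfolding A_def by blast
  have ub: "fleq \<nu> (T h) s" if h: "h \<in> H" "fleq \<mu> 0 h" "fleq \<mu> h x" for h
  proof -
    define I where "I = {\<sigma> \<in> H. fleq \<mu> 0 \<sigma> \<and> fleq \<nu> (T \<sigma>) s}"
    define net where "net = (\<lambda>\<sigma>. h - finf \<mu> h \<sigma>)"
    have pkI: "pk x k \<in> I" if "k \<in> M" for k
      using that MK pk_H[OF x] pk_nonneg[OF x] F.is_sup_ub[OF s] unfolding I_def A_def by blast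
    have I0: "0 \<in> I" unfolding I_def using s0 by simp
    have dir: "directed_index I (fleq \<mu>)" unfolding directed_index_def
    proof (intro conjI ballI impI)
      show "I \<noteq> {}" using I0 by blast
      show "fleq \<mu> a a" for a by simp
      show "fleq \<mu> a c" if "fleq \<mu> a b \<and> fleq \<mu> b c" for a b c using that E.trans[of a b c] by blast
      fix a b assume ab: "a \<in> I" "b \<in> I"
      have "fsup \<mu> a b \<in> I" unfolding I_def
      proof (intro CollectI conjI)
        show "fsup \<mu> a b \<in> H" using ab H_sup unfolding I_def by blast
        have "fleq \<mu> 0 a" using ab unfolding I_def by blast
        then show "fleq \<mu> 0 (fsup \<mu> a b)" using E.trans[OF _ E.sup_ge1] by blast
        have "T (fsup \<mu> a b) = fsup \<nu> (T a) (T b)" using ab T_sup unfolding I_def by blast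
        then show "fleq \<nu> (T (fsup \<mu> a b)) s" using ab F.sup_least unfolding I_def by auto
      qed
      then show "\<exists>c\<in>I. fleq \<mu> a c \<and> fleq \<mu> b c" using E.sup_ge1 E.sup_ge2 by blast
    qed
    have netH: "\<forall>\<sigma>\<in>I. net \<sigma> \<in> H" unfolding net_def I_def using H_diff H_inf h(1) by blast
    have net0: "fleq \<mu> 0 (net \<sigma>)" for \<sigma> unfolding net_def using E.inf_le1 E.le_diff by blast
    have conv: "fuzzy_order_conv \<mu> H I (fleq \<mu>) net 0" unfolding fuzzy_order_conv_def
    proof (rule exI[of _ net], intro conjI ballI impI)
      show "net a \<in> H" if "a \<in> I" for a using netH that by blast
      show "fleq \<mu> (net b) (net a)" if "a \<in> I" "b \<in> I" "fleq \<mu> a b" for a b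
        unfolding net_def using E.diff_mono[OF E.refl E.inf_mono[OF E.refl that(3)]] .
      show "fleq \<mu> (fabs \<mu> (net a - 0)) (net a)" for a using E.fabs_pos[OF net0] by simp
      show "is_inf \<mu> H (net ` I) 0"
      proof (rule E.is_infI)
        show "0 \<in> H" by simp
        show "fleq \<mu> 0 a" if "a \<in> net ` I" for a using that net0 by blast
        fix l assume l: "l \<in> H" "\<And>a. a \<in> net ` I \<Longrightarrow> fleq \<mu> l a"
        define l' where "l' = fsup \<mu> l 0"
        have l'H: "l' \<in> H" unfolding l'_def using H_sup[OF l(1) H0] .
        have l'0: "fleq \<mu> 0 l'" unfolding l'_def by (rule E.sup_ge2)
        have l'n: "fleq \<mu> l' (net \<sigma>)" if "\<sigma> \<in> I" for \<sigma>
          unfolding l'_def using E.sup_least[OF l(2) net0] that by blast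
        have "net 0 = h" unfolding net_def using E.inf_absorb2[OF h(2)] by simp
        then have l'h: "fleq \<mu> l' h" using l'n[OF I0] by simp
        have "l' = 0"
          by (rule key_zero[OF x M h l'H l'0 l'h]) (use l'n pkI in \<open>auto simp: net_def\<close>)
        then show "fleq \<mu> l 0" using E.sup_ge1[of l 0] unfolding l'_def by simp
      qed
    qed
    have "fuzzy_order_conv \<nu> UNIV I (fleq \<mu>) (T \<circ> net) 0"
      using T_oc dir netH conv unfolding fuzzy_order_continuous_def by blast
    then obtain z where z: "is_inf \<nu> UNIV (z ` I) 0" "\<forall>\<alpha>\<in>I. fleq \<nu> (fabs \<nu> ((T \<circ> net) \<alpha> - 0)) (z \<alpha>)"
      unfolding fuzzy_order_conv_def by blast
    have "fleq \<nu> (T h - s) a" if aI: "a \<in> z ` I" for a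
    proof -
      obtain \<sigma> where \<sigma>: "\<sigma> \<in> I" "a = z \<sigma>" using aI by blast
      have \<sigma>H: "\<sigma> \<in> H" using \<sigma> unfolding I_def by blast
      have e: "T (net \<sigma>) = T h - T (finf \<mu> h \<sigma>)" unfolding net_def using T_diff[OF h(1) H_inf[OF h(1) \<sigma>H]] .
      have "fleq \<nu> (T (finf \<mu> h \<sigma>)) (T \<sigma>)" using T_mono[OF H_inf[OF h(1) \<sigma>H] \<sigma>H E.inf_le2] .
      moreover have "fleq \<nu> (T \<sigma>) s" using \<sigma> unfolding I_def by blast
      ultimately have "fleq \<nu> (T (finf \<mu> h \<sigma>)) s" by (rule F.trans)
      then have "fleq \<nu> (T h - s) (T (net \<sigma>))" unfolding e using F.diff_mono[OF F.refl] by blast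
      moreover have "fleq \<nu> (T (net \<sigma>)) (fabs \<nu> (T (net \<sigma>)))" by (rule F.le_fabs)
      moreover have "fleq \<nu> (fabs \<nu> (T (net \<sigma>))) (z \<sigma>)" using z(2) \<sigma>(1) by simp
      ultimately show ?thesis using F.trans \<sigma>(2) by metis
    qed
    then have "fleq \<nu> (T h - s) 0" using F.is_inf_greatest[OF z(1)] by blast
    then show ?thesis using F.le_diff2 by blast
  qed
  have "is_sup \<nu> UNIV (Wset x) s"
  proof (rule F.is_supI)
    show "s \<in> UNIV" by simp
    show "fleq \<nu> w s" if "w \<in> Wset x" for w using that ub unfolding Wset_def by blast
    fix u assume u: "\<And>w. w \<in> Wset x \<Longrightarrow> fleq \<nu> w u"
    show "fleq \<nu> s u"
    proof (rule F.is_sup_least[OF s])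
      show "u \<in> UNIV" by simp
      fix a assume "a \<in> A"
      then consider "a = 0" | k where "k \<in> M" "a = T (pk x k)" unfolding A_def by blast
      then show "fleq \<nu> a u"
      proof cases
        case 1
        have "T 0 \<in> Wset x" unfolding Wset_def using x by fastforce
        then show ?thesis using u 1 by simp
      next
        case 2
        have "T (pk x k) \<in> Wset x" unfolding Wset_def
          using 2 MK pk_H[OF x] pk_nonneg[OF x] pk_le[OF x] by blast
        then show ?thesis using u 2 by simp
      qed
    qed
  qed
  then show ?thesis by blast
qed

end


context ext
begin

definition S0 where "S0 x = (THE s. is_sup \<nu> UNIV (Wset x) s)"
definition Sx where "Sx x = S0 (fsup \<mu> x 0) - S0 (fsup \<mu> (-x) 0)"

lemma S0_sup: assumes "fleq \<mu> 0 x" shows "is_sup \<nu> UNIV (Wset x) (S0 x)"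
proof -
  obtain s where s: "is_sup \<nu> UNIV (Wset x) s" using sup_exists[OF assms] by blast
  have "S0 x = s" unfolding S0_def
    by (rule the_equality[where P="\<lambda>s. is_sup \<nu> UNIV (Wset x) s", OF s]) (use s F.sup_unique in blast)
  then show ?thesis using s by simp
qed

lemma S0_eqI: "fleq \<mu> 0 x \<Longrightarrow> is_sup \<nu> UNIV (Wset x) s \<Longrightarrow> S0 x = s"
  using S0_sup F.sup_unique by blast

lemma S0_H: assumes h: "h \<in> H" "fleq \<mu> 0 h" shows "S0 h = T h"
proof (rule S0_eqI[OF h(2)], rule F.is_supI)
  have Th: "T h \<in> Wset h" unfolding Wset_def using h E.refl by blast
  show "T h \<in> UNIV" by simp
  show "fleq \<nu> w (T h)" if "w \<in> Wset h" for w
    using that T_mono h(1) unfolding Wset_def by blast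
  show "fleq \<nu> (T h) u" if "u \<in> UNIV" "\<And>w. w \<in> Wset h \<Longrightarrow> fleq \<nu> w u" for u
    using that(2)[OF Th] .
qed

lemma S0_zero[simp]: "S0 0 = 0" using S0_H[of 0] by simp

lemma S0_nonneg: assumes "fleq \<mu> 0 x" shows "fleq \<nu> 0 (S0 x)"
proof -
  have "T 0 \<in> Wset x" unfolding Wset_def using assms by fastforce
  then show ?thesis using F.is_sup_ub[OF S0_sup[OF assms]] by simp
qed

lemma S0_mono: assumes x: "fleq \<mu> 0 x" and xy: "fleq \<mu> x y" shows "fleq \<nu> (S0 x) (S0 y)"
proof -
  have y: "fleq \<mu> 0 y" using E.trans[OF x xy] .
  have "Wset x \<subseteq> Wset y" unfolding Wset_def using xy E.trans by blast
  then show ?thesis using F.is_sup_least[OF S0_sup[OF x]] F.is_sup_ub[OF S0_sup[OF y]] by blast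
qed

lemma S0_add: assumes x: "fleq \<mu> 0 x" and y: "fleq \<mu> 0 y" shows "S0 (x + y) = S0 x + S0 y"
proof -
  have xy: "fleq \<mu> 0 (x + y)" using E.add_mono[OF x y] by simp
  have "Wset (x + y) = {a + b | a b. a \<in> Wset x \<and> b \<in> Wset y}"
  proof (intro equalityI subsetI)
    fix w assume "w \<in> Wset (x + y)"
    then obtain h where h: "w = T h" "h \<in> H" "fleq \<mu> 0 h" "fleq \<mu> h (x + y)" unfolding Wset_def by blast
    define h1 where "h1 = finf \<mu> h x"
    define h2 where "h2 = h - h1"
    have h1H: "h1 \<in> H" unfolding h1_def using ideal_inf[OF x h(2,3)] E.inf_comm by metis
    have h2H: "h2 \<in> H" unfolding h2_def using H_diff[OF h(2) h1H] .
    have h10: "fleq \<mu> 0 h1" unfolding h1_def using E.inf_greatest[OF h(3) x] .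
    have h1x: "fleq \<mu> h1 x" unfolding h1_def by (rule E.inf_le2)
    have h20: "fleq \<mu> 0 h2" unfolding h2_def h1_def using E.inf_le1 E.le_diff by blast
    have "h2 = fsup \<mu> (h - x) 0" unfolding h2_def h1_def by (rule E.diff_inf)
    moreover have "fleq \<mu> (h - x) y"
    proof -
      have "fleq \<mu> (h + (-x)) (x + y + (-x))" using h(4) by (rule E.add_right)
      then show ?thesis by simp
    qed
    ultimately have h2y: "fleq \<mu> h2 y" using E.sup_least[OF _ y] by simp
    have "w = T h1 + T h2" unfolding h(1) using T_add[OF h1H h2H] h2_def by simp
    moreover have "T h1 \<in> Wset x" unfolding Wset_def using h1H h10 h1x by blast
    moreover have "T h2 \<in> Wset y" unfolding Wset_def using h2H h20 h2y by blast
    ultimately show "w \<in> {a + b | a b. a \<in> Wset x \<and> b \<in> Wset y}" by blast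
  next
    fix w assume "w \<in> {a + b | a b. a \<in> Wset x \<and> b \<in> Wset y}"
    then obtain a b where ab: "w = T a + T b" "a \<in> H" "fleq \<mu> 0 a" "fleq \<mu> a x" "b \<in> H" "fleq \<mu> 0 b" "fleq \<mu> b y"
      unfolding Wset_def by blast
    have "w = T (a + b)" using ab T_add by simp
    moreover have "fleq \<mu> 0 (a + b)" using E.add_mono[OF ab(3) ab(6)] by simp
    moreover have "fleq \<mu> (a + b) (x + y)" using E.add_mono[OF ab(4) ab(7)] .
    ultimately show "w \<in> Wset (x + y)" unfolding Wset_def using H_add ab by blast
  qed
  then have "is_sup \<nu> UNIV (Wset (x + y)) (S0 x + S0 y)"
    using F.sup_add_sets[OF S0_sup[OF x] S0_sup[OF y]] by simp
  then show ?thesis using S0_eqI[OF xy] by blast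
qed

lemma S0_scale: assumes c: "c > 0" and x: "fleq \<mu> 0 x" shows "S0 (c *\<^sub>R x) = c *\<^sub>R S0 x"
proof -
  have cx: "fleq \<mu> 0 (c *\<^sub>R x)" using E.scale_nonneg c x by simp
  have "Wset (c *\<^sub>R x) = (\<lambda>w. c *\<^sub>R w) ` Wset x"
  proof (intro equalityI subsetI)
    fix w assume "w \<in> Wset (c *\<^sub>R x)"
    then obtain h where h: "w = T h" "h \<in> H" "fleq \<mu> 0 h" "fleq \<mu> h (c *\<^sub>R x)" unfolding Wset_def by blast
    define g where "g = inverse c *\<^sub>R h"
    have gH: "g \<in> H" unfolding g_def using H_scale h(2) by blast
    have g0: "fleq \<mu> 0 g" unfolding g_def using E.scale_nonneg h(3) c by simp
    have "fleq \<mu> (inverse c *\<^sub>R h) (inverse c *\<^sub>R (c *\<^sub>R x))" using E.scale_pos[OF _ h(4), of "inverse c"] c by simp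
    then have gx: "fleq \<mu> g x" unfolding g_def using c by simp
    have "h = c *\<^sub>R g" unfolding g_def using c by simp
    then have "w = c *\<^sub>R T g" using h(1) T_scale[OF gH] by simp
    moreover have "T g \<in> Wset x" unfolding Wset_def using gH g0 gx by blast
    ultimately show "w \<in> (\<lambda>w. c *\<^sub>R w) ` Wset x" by blast
  next
    fix w assume "w \<in> (\<lambda>w. c *\<^sub>R w) ` Wset x"
    then obtain h where h: "w = c *\<^sub>R T h" "h \<in> H" "fleq \<mu> 0 h" "fleq \<mu> h x" unfolding Wset_def by blast
    have "w = T (c *\<^sub>R h)" using h T_scale by simp
    moreover have "fleq \<mu> 0 (c *\<^sub>R h)" using E.scale_nonneg c h(3) by simp
    moreover have "fleq \<mu> (c *\<^sub>R h) (c *\<^sub>R x)" using E.scale_pos c h(4) by simp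
    ultimately show "w \<in> Wset (c *\<^sub>R x)" unfolding Wset_def using H_scale h(2) by blast
  qed
  then have "is_sup \<nu> UNIV (Wset (c *\<^sub>R x)) (c *\<^sub>R S0 x)"
    using F.sup_scale_set[OF c S0_sup[OF x]] by simp
  then show ?thesis using S0_eqI[OF cx] by blast
qed

lemma Sx_diff: assumes a: "fleq \<mu> 0 a" and b: "fleq \<mu> 0 b" shows "Sx (a - b) = S0 a - S0 b"
proof -
  let ?p = "fsup \<mu> (a - b) 0" and ?n = "fsup \<mu> (-(a - b)) 0"
  have "a - b = ?p - ?n" by (rule E.pos_decomp)
  then have "?p + b = a + ?n" by (simp add: algebra_simps)
  then have "S0 (?p + b) = S0 (a + ?n)" by simp
  then have "S0 ?p + S0 b = S0 a + S0 ?n" using S0_add E.sup_ge2 a b by metis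
  then show ?thesis unfolding Sx_def by (simp add: algebra_simps)
qed

lemma Sx_pos: "fleq \<mu> 0 x \<Longrightarrow> Sx x = S0 x"
  using Sx_diff[of x 0] by simp

lemma Sx_add: "Sx (x + y) = Sx x + Sx y"
proof -
  let ?xp = "fsup \<mu> x 0" and ?xn = "fsup \<mu> (-x) 0" and ?yp = "fsup \<mu> y 0" and ?yn = "fsup \<mu> (-y) 0"
  have "x + y = (?xp - ?xn) + (?yp - ?yn)" using E.pos_decomp[of x] E.pos_decomp[of y] by (rule arg_cong2[where f="(+)"])
  also have "\<dots> = (?xp + ?yp) - (?xn + ?yn)" by (simp add: algebra_simps)
  finally have "x + y = (?xp + ?yp) - (?xn + ?yn)" .
  then have "Sx (x + y) = S0 (?xp + ?yp) - S0 (?xn + ?yn)"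
    using Sx_diff E.add_mono[OF E.sup_ge2 E.sup_ge2] by (metis add_0)
  then show ?thesis unfolding Sx_def using S0_add E.sup_ge2 by (simp add: algebra_simps)
qed

lemma Sx_scale: "Sx (c *\<^sub>R x) = c *\<^sub>R Sx x"
proof -
  let ?xp = "fsup \<mu> x 0" and ?xn = "fsup \<mu> (-x) 0"
  have d: "x = ?xp - ?xn" by (rule E.pos_decomp)
  consider "c > 0" | "c = 0" | "c < 0" by linarith
  then show ?thesis
  proof cases
    case 1
    have "c *\<^sub>R x = c *\<^sub>R ?xp - c *\<^sub>R ?xn" using d by (metis scaleR_diff_right)
    then have "Sx (c *\<^sub>R x) = S0 (c *\<^sub>R ?xp) - S0 (c *\<^sub>R ?xn)"
      using Sx_diff E.scale_nonneg E.sup_ge2 1 by (metis less_imp_le)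
    then show ?thesis unfolding Sx_def using S0_scale[OF 1] E.sup_ge2 by (simp add: scaleR_diff_right)
  next
    case 2 then show ?thesis unfolding Sx_def by simp
  next
    case 3
    then have c': "-c > 0" by simp
    have "c *\<^sub>R x = (-c) *\<^sub>R ?xn - (-c) *\<^sub>R ?xp" using d by (metis minus_diff_eq scaleR_diff_right scaleR_minus_left)
    then have "Sx (c *\<^sub>R x) = S0 ((-c) *\<^sub>R ?xn) - S0 ((-c) *\<^sub>R ?xp)"
      using Sx_diff E.scale_nonneg E.sup_ge2 c' by (metis less_imp_le)
    then show ?thesis unfolding Sx_def using S0_scale[OF c'] E.sup_ge2 by (simp add: scaleR_diff_right)
  qed
qed

lemma Sx_linear: "linear Sx"
  by (rule linearI) (simp_all add: Sx_add Sx_scale)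

lemma Sx_neg: "Sx (- x) = - Sx x" using Sx_scale[of "-1" x] by simp
lemma Sx_sub: "Sx (x - y) = Sx x - Sx y" using Sx_add[of x "-y"] Sx_neg[of y] by simp
lemma Sx_zero[simp]: "Sx 0 = 0" using Sx_scale[of 0 0] by simp

lemma Sx_H: assumes h: "h \<in> H" shows "Sx h = T h"
proof -
  have "Sx h = T (fsup \<mu> h 0) - T (fsup \<mu> (-h) 0)"
    unfolding Sx_def using S0_H H_sup H_neg h E.sup_ge2 by simp
  also have "\<dots> = T (fsup \<mu> h 0 - fsup \<mu> (-h) 0)" using T_diff H_sup H_neg h by simp
  also have "\<dots> = T h" using E.pos_decomp[of h] by simp
  finally show ?thesis .
qed

lemma Sx_mono: "fleq \<mu> x y \<Longrightarrow> fleq \<nu> (Sx x) (Sx y)"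
proof -
  assume "fleq \<mu> x y"
  then have "fleq \<mu> 0 (y - x)" using E.le_diff by blast
  then have "fleq \<nu> 0 (Sx (y - x))" using Sx_pos S0_nonneg by simp
  then show ?thesis using Sx_sub F.le_diff by simp
qed

lemma S0_inf: assumes a: "fleq \<mu> 0 a" and b: "fleq \<mu> 0 b"
  shows "S0 (finf \<mu> a b) = finf \<nu> (S0 a) (S0 b)"
proof -
  have ab: "fleq \<mu> 0 (finf \<mu> a b)" using E.inf_greatest[OF a b] .
  let ?m = "S0 (finf \<mu> a b)"
  have 1: "fleq \<nu> ?m (finf \<nu> (S0 a) (S0 b))"
    using F.inf_greatest[OF S0_mono[OF ab E.inf_le1] S0_mono[OF ab E.inf_le2]] .
  have "fleq \<nu> (finf \<nu> (S0 b) w) ?m" if w: "w \<in> Wset a" for w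
  proof -
    obtain d where d: "w = T d" "d \<in> H" "fleq \<mu> 0 d" "fleq \<mu> d a" using w unfolding Wset_def by blast
    have "is_sup \<nu> UNIV {finf \<nu> w' w | w'. w' \<in> Wset b} (finf \<nu> (S0 b) w)"
      by (rule F.inf_distrib[OF S0_sup[OF b]])
    moreover have "fleq \<nu> v ?m" if v: "v \<in> {finf \<nu> w' w | w'. w' \<in> Wset b}" for v
    proof -
      obtain e where e: "v = finf \<nu> (T e) (T d)" "e \<in> H" "fleq \<mu> 0 e" "fleq \<mu> e b"
        using v d(1) unfolding Wset_def by blast
      have "v = T (finf \<mu> e d)" using T_inf[OF e(2) d(2)] e(1) by simp
      moreover have "T (finf \<mu> e d) \<in> Wset (finf \<mu> a b)"
      proof -
        have "fleq \<mu> (finf \<mu> e d) (finf \<mu> b a)" using E.inf_mono[OF e(4) d(4)] .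
        then have "fleq \<mu> (finf \<mu> e d) (finf \<mu> a b)" using E.inf_comm[of b a] by simp
        then show ?thesis unfolding Wset_def using H_inf[OF e(2) d(2)] E.inf_greatest[OF e(3) d(3)] by blast
      qed
      ultimately show ?thesis using F.is_sup_ub[OF S0_sup[OF ab]] by simp
    qed
    ultimately show ?thesis using F.is_sup_least by blast
  qed
  then have "fleq \<nu> (finf \<nu> w (S0 b)) ?m" if "w \<in> Wset a" for w using that F.inf_comm by metis
  then have 2: "fleq \<nu> (finf \<nu> (S0 a) (S0 b)) ?m"
    using F.is_sup_least[OF F.inf_distrib[OF S0_sup[OF a]], of ?m "S0 b"] by blast
  show ?thesis using F.antisym[OF 1 2] .
qed

lemma Sx_pos_part: "Sx (fsup \<mu> u 0) = fsup \<nu> (Sx u) 0"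
proof -
  let ?p = "fsup \<mu> u 0" and ?n = "fsup \<mu> (-u) 0"
  have "finf \<nu> (S0 ?p) (S0 ?n) = S0 (finf \<mu> ?p ?n)" using S0_inf E.sup_ge2 by metis
  also have "\<dots> = 0" using E.pos_neg_disj by simp
  finally have "fsup \<nu> (S0 ?p - S0 ?n) 0 = S0 ?p" by (rule F.disj_pos_diff)
  then show ?thesis using Sx_pos[OF E.sup_ge2] unfolding Sx_def by simp
qed

lemma Sx_sup: "Sx (fsup \<mu> x y) = fsup \<nu> (Sx x) (Sx y)"
proof -
  have e1: "fsup \<mu> x y = fsup \<mu> (x - y) 0 + y" using E.sup_translate[of "x - y" y 0] by simp
  have e2: "fsup \<nu> (Sx x) (Sx y) = fsup \<nu> (Sx x - Sx y) 0 + Sx y" using F.sup_translate[of "Sx x - Sx y" "Sx y" 0] by simp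
  show ?thesis unfolding e1 e2 Sx_add Sx_pos_part Sx_sub ..
qed

lemma Sx_fabs: "Sx (fabs \<mu> x) = fabs \<nu> (Sx x)"
  unfolding fabs_def Sx_sup Sx_neg ..

end


context ext
begin

lemma Sx_cont: "fuzzy_order_continuous TYPE('i) \<mu> UNIV \<nu> Sx"
  unfolding fuzzy_order_continuous_def
proof (intro allI impI)
  fix I :: "'i set" and le xn
  assume a: "directed_index I le \<and> (\<forall>\<alpha>\<in>I. xn \<alpha> \<in> UNIV) \<and> fuzzy_order_conv \<mu> UNIV I le xn 0"
  have dir: "directed_index I le" using a by blast
  obtain y where y: "\<forall>\<alpha>\<in>I. \<forall>\<beta>\<in>I. le \<alpha> \<beta> \<longrightarrow> fleq \<mu> (y \<beta>) (y \<alpha>)" "is_inf \<mu> UNIV (y ` I) 0"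
      "\<forall>\<alpha>\<in>I. fleq \<mu> (fabs \<mu> (xn \<alpha> - 0)) (y \<alpha>)"
    using a unfolding fuzzy_order_conv_def by blast
  have y0: "fleq \<mu> 0 (y \<alpha>)" if "\<alpha> \<in> I" for \<alpha>
    using E.trans[OF E.fabs_nonneg] y(3) that by blast
  have Ine: "I \<noteq> {}" using dir unfolding directed_index_def by blast
  show "fuzzy_order_conv \<nu> UNIV I le (Sx \<circ> xn) 0"
    unfolding fuzzy_order_conv_def
  proof (rule exI[of _ "\<lambda>\<alpha>. Sx (y \<alpha>)"], intro conjI ballI impI)
    show "Sx (y \<alpha>) \<in> UNIV" for \<alpha> by simp
    show "fleq \<nu> (Sx (y \<beta>)) (Sx (y \<alpha>))" if "\<alpha> \<in> I" "\<beta> \<in> I" "le \<alpha> \<beta>" for \<alpha> \<beta>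
      using Sx_mono y(1) that by blast
    show "fleq \<nu> (fabs \<nu> ((Sx \<circ> xn) \<alpha> - 0)) (Sx (y \<alpha>))" if "\<alpha> \<in> I" for \<alpha>
      using Sx_mono[of "fabs \<mu> (xn \<alpha>)" "y \<alpha>"] y(3) that Sx_fabs by simp
    show "is_inf \<nu> UNIV ((\<lambda>\<alpha>. Sx (y \<alpha>)) ` I) 0"
    proof (rule F.is_infI)
      show "0 \<in> UNIV" by simp
      show "fleq \<nu> 0 a" if "a \<in> (\<lambda>\<alpha>. Sx (y \<alpha>)) ` I" for a
        using that Sx_mono y0 by fastforce
      fix f assume f: "f \<in> UNIV" "\<And>a. a \<in> (\<lambda>\<alpha>. Sx (y \<alpha>)) ` I \<Longrightarrow> fleq \<nu> f a"
      define f' where "f' = fsup \<nu> f 0"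
      have f'0: "fleq \<nu> 0 f'" unfolding f'_def by (rule F.sup_ge2)
      have f'y: "fleq \<nu> f' (Sx (y \<alpha>))" if "\<alpha> \<in> I" for \<alpha>
        unfolding f'_def using F.sup_least[OF f(2)] that Sx_mono[OF y0[OF that]] by simp
      have fh: "finf \<nu> f' (T h) = 0" if h: "h \<in> H" "fleq \<mu> 0 h" for h
      proof -
        define D where "D = {finf \<mu> (y \<alpha>) h | \<alpha>. \<alpha> \<in> I}"
        define le' where "le' = (\<lambda>a b. fleq \<mu> b a)"
        have DH: "\<forall>d\<in>D. d \<in> H" unfolding D_def using ideal_inf[OF y0 h] by blast
        have D0: "fleq \<mu> 0 d" if "d \<in> D" for d
          using that E.inf_greatest[OF y0 h(2)] unfolding D_def by blast
        have dirD: "directed_index D le'" unfolding directed_index_def le'_def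
        proof (intro conjI ballI impI)
          show "D \<noteq> {}" using Ine unfolding D_def by blast
          show "fleq \<mu> a a" for a by simp
          show "fleq \<mu> c a" if "fleq \<mu> b a \<and> fleq \<mu> c b" for a b c using that E.trans[of c b a] by blast
          fix d1 d2 assume d: "d1 \<in> D" "d2 \<in> D"
          obtain \<alpha> where \<alpha>: "\<alpha> \<in> I" "d1 = finf \<mu> (y \<alpha>) h" using d(1) unfolding D_def by blast
          obtain \<beta> where \<beta>: "\<beta> \<in> I" "d2 = finf \<mu> (y \<beta>) h" using d(2) unfolding D_def by blast
          obtain \<gamma> where \<gamma>: "\<gamma> \<in> I" "le \<alpha> \<gamma>" "le \<beta> \<gamma>" using dir \<alpha>(1) \<beta>(1) unfolding directed_index_def by blast
          have "finf \<mu> (y \<gamma>) h \<in> D" unfolding D_def using \<gamma>(1) by blast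
          moreover have "fleq \<mu> (finf \<mu> (y \<gamma>) h) d1" unfolding \<alpha>(2)
            using E.inf_mono[OF _ E.refl] y(1) \<alpha>(1) \<gamma> by blast
          moreover have "fleq \<mu> (finf \<mu> (y \<gamma>) h) d2" unfolding \<beta>(2)
            using E.inf_mono[OF _ E.refl] y(1) \<beta>(1) \<gamma> by blast
          ultimately show "\<exists>c\<in>D. fleq \<mu> c d1 \<and> fleq \<mu> c d2" by blast
        qed
        have convD: "fuzzy_order_conv \<mu> H D le' id 0" unfolding fuzzy_order_conv_def
        proof (rule exI[of _ id], intro conjI ballI impI)
          show "id a \<in> H" if "a \<in> D" for a using DH that by simp
          show "fleq \<mu> (id b) (id a)" if "a \<in> D" "b \<in> D" "le' a b" for a b using that unfolding le'_def by simp
          show "fleq \<mu> (fabs \<mu> (id a - 0)) (id a)" if "a \<in> D" for a using E.fabs_pos[OF D0[OF that]] by simp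
          show "is_inf \<mu> H (id ` D) 0"
          proof (rule E.is_infI)
            show "0 \<in> H" by simp
            show "fleq \<mu> 0 a" if "a \<in> id ` D" for a using D0 that by simp
            fix l assume l: "l \<in> H" "\<And>a. a \<in> id ` D \<Longrightarrow> fleq \<mu> l a"
            have "fleq \<mu> l b" if "b \<in> y ` I" for b
            proof -
              obtain \<alpha> where \<alpha>: "\<alpha> \<in> I" "b = y \<alpha>" using \<open>b \<in> y ` I\<close> by blast
              have "finf \<mu> (y \<alpha>) h \<in> id ` D" unfolding D_def using \<alpha>(1) by auto
              then have "fleq \<mu> l (finf \<mu> (y \<alpha>) h)" using l(2) by blast
              then show ?thesis using E.trans[OF _ E.inf_le1] \<alpha>(2) by blast
            qed
            then show "fleq \<mu> l 0" using E.is_inf_greatest[OF y(2)] by blast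
          qed
        qed
        have "fuzzy_order_conv \<nu> UNIV D le' (T \<circ> id) 0"
        proof -
          have "\<forall>d\<in>D. id d \<in> H" using DH by simp
          then show ?thesis using mp[OF spec[OF spec[OF spec[OF T_oc[unfolded fuzzy_order_continuous_def], of D], of le'], of id]] dirD convD by blast
        qed
        then obtain z where z: "is_inf \<nu> UNIV (z ` D) 0" "\<forall>\<alpha>\<in>D. fleq \<nu> (fabs \<nu> ((T \<circ> id) \<alpha> - 0)) (z \<alpha>)"
          unfolding fuzzy_order_conv_def by blast
        have "fleq \<nu> (finf \<nu> f' (T h)) b" if b: "b \<in> z ` D" for b
        proof -
          obtain d where d: "d \<in> D" "b = z d" using b by blast
          obtain \<alpha> where \<alpha>: "\<alpha> \<in> I" "d = finf \<mu> (y \<alpha>) h" using d(1) unfolding D_def by blast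
          have "fleq \<nu> (finf \<nu> f' (T h)) (finf \<nu> (Sx (y \<alpha>)) (T h))" using F.inf_mono[OF f'y[OF \<alpha>(1)] F.refl] .
          also have "finf \<nu> (Sx (y \<alpha>)) (T h) = S0 (finf \<mu> (y \<alpha>) h)"
            using S0_inf[OF y0[OF \<alpha>(1)] h(2)] Sx_pos[OF y0[OF \<alpha>(1)]] S0_H[OF h] by simp
          also have "\<dots> = T d" using S0_H[OF _ D0[OF d(1)]] DH d(1) \<alpha>(2) by simp
          finally have 1: "fleq \<nu> (finf \<nu> f' (T h)) (T d)" .
          have 2: "fleq \<nu> (T d) (fabs \<nu> (T d))" by (rule F.le_fabs)
          have 3: "fleq \<nu> (fabs \<nu> (T d)) (z d)" using z(2) d(1) by simp
          show ?thesis using F.trans[OF F.trans[OF 1 2] 3] d(2) by simp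
        qed
        then have "fleq \<nu> (finf \<nu> f' (T h)) 0" using F.is_inf_greatest[OF z(1)] by blast
        moreover have "fleq \<nu> 0 (finf \<nu> f' (T h))" using F.inf_greatest[OF f'0 T_pos[OF h]] .
        ultimately show ?thesis using F.antisym by blast
      qed
      obtain \<alpha>0 where \<alpha>0: "\<alpha>0 \<in> I" using Ine by blast
      have y\<alpha>: "fleq \<mu> 0 (y \<alpha>0)" using y0[OF \<alpha>0] .
      have "f' = finf \<nu> (S0 (y \<alpha>0)) f'"
        using F.inf_absorb2[OF f'y[OF \<alpha>0]] Sx_pos[OF y\<alpha>] by simp
      moreover have "fleq \<nu> (finf \<nu> (S0 (y \<alpha>0)) f') 0"
      proof (rule F.is_sup_least[OF F.inf_distrib[OF S0_sup[OF y\<alpha>]]])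
        show "0 \<in> UNIV" by simp
        fix v assume "v \<in> {finf \<nu> w f' | w. w \<in> Wset (y \<alpha>0)}"
        then obtain h where h: "v = finf \<nu> (T h) f'" "h \<in> H" "fleq \<mu> 0 h" unfolding Wset_def by blast
        have "v = finf \<nu> f' (T h)" using h(1) F.inf_comm by simp
        then show "fleq \<nu> v 0" using fh[OF h(2,3)] by simp
      qed
      ultimately have "fleq \<nu> f' 0" by simp
      then show "fleq \<nu> f 0" using F.trans[OF F.sup_ge1] unfolding f'_def by blast
    qed
  qed
qed

end

theorem theorem4p16:
  fixes \<mu> :: "'a::real_vector \<Rightarrow> 'a \<Rightarrow> real"
    and \<nu> :: "'b::real_vector \<Rightarrow> 'b \<Rightarrow> real"
    and H :: "'a set"
    and T :: "'a \<Rightarrow> 'b"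
  assumes E_riesz: "fuzzy_riesz_space \<mu>"
    and E_arch: "fuzzy_archimedean \<mu>"
    and H_sub: "fuzzy_riesz_subspace \<mu> H"
    and H_dense: "fuzzy_order_dense \<mu> H"
    and H_dc: "fuzzy_dedekind_complete \<mu> H"
    and F_riesz: "fuzzy_riesz_space \<nu>"
    and F_arch: "fuzzy_archimedean \<nu>"
    and F_lat: "laterally_complete \<nu>"
    and T_hom: "lattice_hom_on \<mu> \<nu> H T"
    and T_oc: "fuzzy_order_continuous TYPE('a) \<mu> H \<nu> T"
  shows "\<exists>S :: 'a \<Rightarrow> 'b.
           (\<forall>x. fleq \<mu> 0 x \<longrightarrow>
                is_sup \<nu> UNIV {T h | h. h \<in> H \<and> fleq \<mu> 0 h \<and> fleq \<mu> h x} (S x)) \<and>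
           (\<forall>h\<in>H. S h = T h) \<and>
           linear S \<and>
           (\<forall>x y. S (fsup \<mu> x y) = fsup \<nu> (S x) (S y)) \<and>
           fuzzy_order_continuous TYPE('i) \<mu> UNIV \<nu> S"
proof -
  interpret X: ext \<mu> \<nu> H T
    by (unfold_locales) (fact E_riesz F_riesz E_arch H_sub H_dense H_dc F_lat T_hom T_oc)+
  show ?thesis
  proof (rule exI[of _ X.Sx], intro conjI allI impI ballI)
    fix x assume "fleq \<mu> 0 x"
    then show "is_sup \<nu> UNIV {T h | h. h \<in> H \<and> fleq \<mu> 0 h \<and> fleq \<mu> h x} (X.Sx x)"
      using X.S0_sup X.Sx_pos unfolding X.Wset_def by simp
  next
    fix h assume "h \<in> H" then show "X.Sx h = T h" by (rule X.Sx_H)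
  next
    show "linear X.Sx" by (rule X.Sx_linear)
  next
    fix x y show "X.Sx (fsup \<mu> x y) = fsup \<nu> (X.Sx x) (X.Sx y)" by (rule X.Sx_sup)
  next
    show "fuzzy_order_continuous TYPE('i) \<mu> UNIV \<nu> X.Sx" by (rule X.Sx_cont)
  qed
qed


end
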